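(* Let $H$ be a Hilbert space, let $a_1,\dots,a_\ell,b_1,\dots,b_\ell\in\mathcal{B}(H)$, and let $T\colon\mathcal{B}(H)\to\mathcal{B}(H)$ be the elementary operator $Tx=\sum_{j=1}^\ell a_jxb_j$. Then \[ \|T\|=\sup_{p_1,p_2}\left\|\sum_{j=1}^\ell (p_1a_j)\otimes(b_jp_2)\right\|_h, \] where the supremum is over all rank one orthogonal projections $p_1,p_2\in\mathcal{B}(H)$ (i.e. $p_i^2=p_i=p_i^*$ of rank one).
   Context: $\|T\|$ is the operator norm of $T$ on $\mathcal{B}(H)$ with the operator norm. $\|\cdot\|_h$ is the Haagerup tensor norm on $\mathcal{B}(H)\otimes\mathcal{B}(H)$: for $u\in\mathcal{B}(H)\otimes\mathcal{B}(H)$, $\|u\|_h=\inf\left\{\left\|\sum_{j=1}^n c_jc_j^*\right\|^{1/2}\left\|\sum_{j=1}^n d_j^*d_j\right\|^{1/2}\right\}$, the infimum over all representations $u=\sum_{j=1}^n c_j\otimes d_j$. *)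

theory Defs
  imports "HOL-Analysis.Analysis"
begin

text \<open>The distribution has no complex Hilbert spaces, so we introduce them as a type class.
  The inner product is conjugate-linear in the first and linear in the second argument.\<close>

class complex_inner = real_normed_vector +
  fixes scaleC :: "complex \<Rightarrow> 'a \<Rightarrow> 'a"
    and cinner :: "'a \<Rightarrow> 'a \<Rightarrow> complex"
  assumes scaleC_add_right: "scaleC c (x + y) = scaleC c x + scaleC c y"
    and scaleC_add_left: "scaleC (b + c) x = scaleC b x + scaleC c x"
    and scaleC_scaleC: "scaleC b (scaleC c x) = scaleC (b * c) x"
    and scaleC_one: "scaleC 1 x = x"
    and scaleR_scaleC: "scaleR r x = scaleC (complex_of_real r) x"
    and cinner_add_right: "cinner x (y + z) = cinner x y + cinner x z"
    and cinner_scaleC_right: "cinner x (scaleC c y) = c * cinner x y"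
    and cinner_commute: "cinner y x = cnj (cinner x y)"
    and cinner_eq_zero_iff: "cinner x x = 0 \<longleftrightarrow> x = 0"
    and cinner_ge_zero: "0 \<le> Re (cinner x x)"
    and norm_eq_sqrt_cinner: "norm x = sqrt (Re (cinner x x))"

class chilbert_space = complex_inner + complete_space

definition bounded_clinear :: "('a::complex_inner \<Rightarrow> 'a) \<Rightarrow> bool" where
  "bounded_clinear f \<longleftrightarrow>
     (\<forall>x y. f (x + y) = f x + f y) \<and>
     (\<forall>c x. f (scaleC c x) = scaleC c (f x)) \<and>
     (\<exists>K. \<forall>x. norm (f x) \<le> norm x * K)"

definition cadj :: "('a::complex_inner \<Rightarrow> 'a) \<Rightarrow> ('a \<Rightarrow> 'a)" where
  "cadj a = (THE b. \<forall>x y. cinner (a x) y = cinner x (b y))"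

definition rank_one_projection :: "('a::complex_inner \<Rightarrow> 'a) \<Rightarrow> bool" where
  "rank_one_projection p \<longleftrightarrow>
     bounded_clinear p \<and> p \<circ> p = p \<and> cadj p = p \<and>
     (\<exists>v. v \<noteq> 0 \<and> range p = {scaleC c v | c. True})"

definition elem_op :: "nat \<Rightarrow> (nat \<Rightarrow> 'a::complex_inner \<Rightarrow> 'a) \<Rightarrow> (nat \<Rightarrow> 'a \<Rightarrow> 'a)
    \<Rightarrow> ('a \<Rightarrow> 'a) \<Rightarrow> ('a \<Rightarrow> 'a)" where
  "elem_op l a b x = (\<lambda>h. \<Sum>j\<in>{1..l}. a j (x (b j h)))"

definition elem_op_norm :: "nat \<Rightarrow> (nat \<Rightarrow> 'a::complex_inner \<Rightarrow> 'a) \<Rightarrow> (nat \<Rightarrow> 'a \<Rightarrow> 'a) \<Rightarrow> real" where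
  "elem_op_norm l a b =
     Sup {onorm (elem_op l a b x) | x. bounded_clinear x \<and> onorm x \<le> 1}"

text \<open>An element of the algebraic tensor product is given by a representation
  sum_j c_j \<otimes> d_j, i.e. a list of pairs (c_j, d_j). Two representations define the same
  tensor iff they agree on all products of linear functionals on B(H)
  (the standard realisation of V \<otimes> W inside bilinear forms on V' \<times> W').\<close>

definition clinear_functional :: "(('a::complex_inner \<Rightarrow> 'a) \<Rightarrow> complex) \<Rightarrow> bool" where
  "clinear_functional \<phi> \<longleftrightarrow>
     (\<forall>x y. bounded_clinear x \<longrightarrow> bounded_clinear y \<longrightarrow> \<phi> (\<lambda>h. x h + y h) = \<phi> x + \<phi> y) \<and>
     (\<forall>c x. bounded_clinear x \<longrightarrow> \<phi> (\<lambda>h. scaleC c (x h)) = c * \<phi> x)"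

definition same_tensor :: "(('a::complex_inner \<Rightarrow> 'a) \<times> ('a \<Rightarrow> 'a)) list
    \<Rightarrow> (('a \<Rightarrow> 'a) \<times> ('a \<Rightarrow> 'a)) list \<Rightarrow> bool" where
  "same_tensor r u \<longleftrightarrow>
     (\<forall>\<phi> \<psi>. clinear_functional \<phi> \<longrightarrow> clinear_functional \<psi> \<longrightarrow>
        sum_list (map (\<lambda>(c, d). \<phi> c * \<psi> d) r) = sum_list (map (\<lambda>(c, d). \<phi> c * \<psi> d) u))"

definition haagerup_norm :: "(('a::complex_inner \<Rightarrow> 'a) \<times> ('a \<Rightarrow> 'a)) list \<Rightarrow> real" where
  "haagerup_norm u =
     Inf {sqrt (onorm (\<lambda>h. sum_list (map (\<lambda>(c, d). c (cadj c h)) r))) *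
          sqrt (onorm (\<lambda>h. sum_list (map (\<lambda>(c, d). cadj d (d h)) r)))
        | r. (\<forall>(c, d) \<in> set r. bounded_clinear c \<and> bounded_clinear d) \<and> same_tensor r u}"

end

theory Submission
  imports Defs
begin

lemma cnj_cinner: "cnj (cinner x y) = cinner y x"
  by (simp add: cinner_commute[of y x])

lemma cinner_add_left: "cinner (x + y) z = cinner x z + cinner y z"
  proof -
  have "cinner (x + y) z = cnj (cinner z (x + y))" by (rule cinner_commute)
  also have "\<dots> = cnj (cinner z x) + cnj (cinner z y)" by (simp add: cinner_add_right)
  finally show ?thesis by (simp only: cnj_cinner)
qed

lemma cinner_scaleC_left: "cinner (scaleC c x) y = cnj c * cinner x y"
  proof -
  have "cinner (scaleC c x) y = cnj (cinner y (scaleC c x))" by (rule cinner_commute)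
  also have "\<dots> = cnj c * cnj (cinner y x)" by (simp add: cinner_scaleC_right)
  finally show ?thesis by (simp only: cnj_cinner)
qed

lemma cinner_zero_right[simp]: "cinner x 0 = 0"
  using cinner_add_right[of x 0 0] by simp

lemma cinner_zero_left[simp]: "cinner 0 x = 0"
  using cinner_add_left[of 0 0 x] by simp

lemma scaleC_minus1: "scaleC (-1) x = - x"
  using scaleR_scaleC[of "-1" x] scaleR_minus1_left[of x] by simp

lemma cinner_minus_right: "cinner x (- y) = - cinner x y"
  using cinner_scaleC_right[of x "-1" y] by (simp add: scaleC_minus1)

lemma cinner_minus_left: "cinner (- x) y = - cinner x y"
  proof -
  have "cinner (- x) y = cnj (cinner y (- x))" by (rule cinner_commute)
  also have "\<dots> = - cnj (cinner y x)" by (simp add: cinner_minus_right)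
  finally show ?thesis by (simp only: cnj_cinner)
qed

lemma cinner_diff_right: "cinner x (y - z) = cinner x y - cinner x z"
  by (simp only: diff_conv_add_uminus cinner_add_right cinner_minus_right)

lemma cinner_diff_left: "cinner (x - y) z = cinner x z - cinner y z"
  by (simp only: diff_conv_add_uminus cinner_add_left cinner_minus_left)

lemma scaleC_zero_left[simp]: "scaleC 0 x = 0"
  using scaleR_scaleC[of 0 x] scaleR_zero_left[of x] by simp

lemma scaleC_zero_right[simp]: "scaleC c 0 = 0"
  using scaleC_add_right[of c 0 0] by simp

lemma scaleC_minus_right: "scaleC c (- x) = - scaleC c x"
  proof -
  have "scaleC c (-x) = scaleC c (scaleC (-1) x)" by (simp add: scaleC_minus1)
  also have "\<dots> = scaleC (-1) (scaleC c x)" by (simp add: scaleC_scaleC mult.commute)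
  finally show ?thesis by (simp add: scaleC_minus1)
qed

lemma scaleC_diff_right: "scaleC c (x - y) = scaleC c x - scaleC c y"
  by (simp only: diff_conv_add_uminus scaleC_add_right scaleC_minus_right)

lemma scaleC_minus_left: "scaleC (- c) x = - scaleC c x"
  using scaleC_scaleC[of "-1" c x] by (simp add: scaleC_minus1)

lemma scaleC_diff_left: "scaleC (b - c) x = scaleC b x - scaleC c x"
  using scaleC_add_left[of b "-c" x] by (simp add: scaleC_minus_left)

lemma cinner_self_real: "cinner x x = complex_of_real (Re (cinner x x))"
proof -
  have "Im (cinner x x) = Im (cnj (cinner x x))" using cinner_commute[of x x] by simp
  hence "Im (cinner x x) = 0" by simp
  thus ?thesis by (simp add: complex_eq_iff)
qed

lemma norm_sq_cinner: "(norm x)^2 = Re (cinner x x)"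
  by (simp add: norm_eq_sqrt_cinner cinner_ge_zero)

lemma cinner_self_norm: "cinner x x = complex_of_real ((norm x)^2)"
  by (subst cinner_self_real, simp only: norm_sq_cinner)

lemma norm_scaleC: "norm (scaleC c x) = cmod c * norm x"
proof -
  have ccn: "c * cnj c = (complex_of_real (cmod c))^2" using complex_norm_square[of c] by simp
  have e: "cnj c * (c * w) = complex_of_real ((cmod c)^2) * w" for w
    by (simp only: complex_norm_square) (simp add: mult_ac)
  have "cinner (scaleC c x) (scaleC c x) = complex_of_real ((cmod c * norm x)^2)"
    by (simp only: cinner_scaleC_left cinner_scaleC_right e cinner_self_norm[of x]) (simp add: power_mult_distrib ccn)
  hence "(norm (scaleC c x))^2 = (cmod c * norm x)^2"
    by (simp add: norm_sq_cinner)
  thus ?thesis by (simp add: power2_eq_iff_nonneg)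
qed

lemma norm_sq_add: "(norm (x + y))^2 = (norm x)^2 + (norm y)^2 + 2 * Re (cinner x y)"
proof -
  have "Re (cinner y x) = Re (cinner x y)" by (simp add: cinner_commute[of y x])
  thus ?thesis by (simp add: norm_sq_cinner cinner_add_left cinner_add_right)
qed

lemma norm_sq_diff: "(norm (x - y))^2 = (norm x)^2 + (norm y)^2 - 2 * Re (cinner x y)"
proof -
  have "Re (cinner y x) = Re (cinner x y)" by (simp add: cinner_commute[of y x])
  thus ?thesis by (simp add: norm_sq_cinner cinner_diff_left cinner_diff_right)
qed

lemma cinner_cs: "cmod (cinner x y) \<le> norm x * norm y"
proof (cases "x = 0")
  case True thus ?thesis by simp
next
  case False
  hence nx: "norm x > 0" by simp
  define t where "t = cinner x y / complex_of_real ((norm x)^2)"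
  have ct: "cmod t = cmod (cinner x y) / (norm x)^2"
    unfolding t_def by (simp add: norm_divide del: of_real_power)
  have c1: "(cmod t)^2 * (norm x)^2 = (cmod (cinner x y))^2 / (norm x)^2"
    unfolding ct using nx by (simp add: field_simps power2_eq_square)
  have c2: "cinner y (scaleC t x) = t * cnj (cinner x y)"
    by (simp add: cinner_scaleC_right cinner_commute[of y x])
  have c3: "Re (t * cnj (cinner x y)) = (cmod (cinner x y))^2 / (norm x)^2"
    unfolding t_def by (simp add: complex_norm_square[symmetric] Re_divide_of_real mult.commute del: of_real_power)
  have "0 \<le> (norm (y - scaleC t x))^2" by simp
  also have "\<dots> = (norm y)^2 + (cmod t)^2 * (norm x)^2 - 2 * Re (cinner y (scaleC t x))"
    by (simp add: norm_sq_diff norm_scaleC power_mult_distrib)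
  finally have "(cmod (cinner x y))^2 / (norm x)^2 \<le> (norm y)^2" unfolding c1 c2 c3 by simp
  hence "(cmod (cinner x y))^2 \<le> (norm x * norm y)^2" using nx
    by (simp add: divide_le_eq power_mult_distrib mult.commute)
  thus ?thesis by (simp add: power2_le_iff_abs_le)
qed

lemma Re_cinner_le: "Re (cinner x y) \<le> norm x * norm y"
  using cinner_cs[of x y] complex_Re_le_cmod order_trans by blast

lemma cinner_eq_zero_iff_all: "(\<forall>z. cinner z x = 0) \<longleftrightarrow> x = 0"
proof
  assume "\<forall>z. cinner z x = 0"
  hence "cinner x x = 0" by blast
  thus "x = 0" using cinner_eq_zero_iff by blast
qed simp

lemma cinner_ext: "(\<And>z. cinner z x = cinner z y) \<Longrightarrow> x = y"
  proof -
  assume a: "\<And>z. cinner z x = cinner z y"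
  have "cinner (x - y) (x - y) = 0" using a[of "x-y"] by (simp add: cinner_diff_right)
  hence "x - y = 0" using cinner_eq_zero_iff by blast
  thus ?thesis by simp
qed

lemma cinner_ext_left: "(\<And>z. cinner x z = cinner y z) \<Longrightarrow> x = y"
  proof -
  assume a: "\<And>z. cinner x z = cinner y z"
  have "cinner (x - y) (x - y) = 0" using a[of "x-y"] by (simp add: cinner_diff_left)
  hence "x - y = 0" using cinner_eq_zero_iff by blast
  thus ?thesis by simp
qed

lemma phase_exists: "\<exists>u::complex. cmod u = 1 \<and> u * w = complex_of_real (cmod w)"
proof (cases "w = 0")
  case True thus ?thesis by (intro exI[of _ 1]) simp
next
  case False
  define u where "u = cnj w / complex_of_real (cmod w)"
  have "cmod u = 1" using False unfolding u_def by (simp add: norm_divide)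
  moreover have "u * w = complex_of_real (cmod w)"
    using False unfolding u_def by (simp add: field_simps complex_norm_square[symmetric] power2_eq_square)
  ultimately show ?thesis by blast
qed

lemma bclinD:
  assumes "bounded_clinear f"
  shows "f (x + y) = f x + f y" "f (scaleC c x) = scaleC c (f x)"
  using assms unfolding bounded_clinear_def by blast+

lemma bclin_bound:
  assumes "bounded_clinear f"
  obtains K where "K \<ge> 0" "\<And>x. norm (f x) \<le> norm x * K"
proof -
  obtain K where K: "\<And>x. norm (f x) \<le> norm x * K" using assms unfolding bounded_clinear_def by blast
  have "norm (f x) \<le> norm x * max K 0" for x
    using K[of x] by (smt (verit, best) mult_left_mono norm_ge_zero)
  thus ?thesis by (intro that[of "max K 0"]) auto
qed

lemma bclin_zero: "bounded_clinear f \<Longrightarrow> f 0 = 0"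
  using bclinD(1)[of f 0 0] by simp

lemma bclin_minus: "bounded_clinear f \<Longrightarrow> f (- x) = - f x"
  using bclinD(2)[of f "-1" x] by (simp add: scaleC_minus1)

lemma bclin_diff: "bounded_clinear f \<Longrightarrow> f (x - y) = f x - f y"
  by (simp only: diff_conv_add_uminus bclinD(1) bclin_minus)

lemma bclin_bounded_linear: "bounded_clinear f \<Longrightarrow> bounded_linear f"
proof -
  assume f: "bounded_clinear f"
  then obtain K where K: "\<And>x. norm (f x) \<le> norm x * K" using bclin_bound by blast
  show ?thesis
  proof (rule bounded_linear_intro[OF _ _ K])
    show "f (x + y) = f x + f y" for x y using bclinD(1)[OF f] .
    show "f (scaleR r x) = scaleR r (f x)" for r x by (simp add: scaleR_scaleC bclinD(2)[OF f])
  qed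
qed

lemma bclin_onorm: "bounded_clinear f \<Longrightarrow> norm (f x) \<le> onorm f * norm x"
  by (rule onorm[OF bclin_bounded_linear])

lemma bclin_sum_list: "bounded_clinear f \<Longrightarrow> f (sum_list (map g L)) = sum_list (map (\<lambda>p. f (g p)) L)"
  by (induction L) (simp_all add: bclin_zero bclinD(1))

lemma cinner_sum_list_right: "cinner x (sum_list (map g L)) = sum_list (map (\<lambda>p. cinner x (g p)) L)"
  by (induction L) (simp_all add: cinner_add_right)

lemma cinner_sum_list_left: "cinner (sum_list (map g L)) x = sum_list (map (\<lambda>p. cinner (g p) x) L)"
  by (induction L) (simp_all add: cinner_add_left)

lemma scaleC_sum_list: "scaleC c (sum_list (map g L)) = sum_list (map (\<lambda>p. scaleC c (g p)) L)"
  by (induction L) (simp_all add: scaleC_add_right)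

lemma bounded_bilinear_cinner: "bounded_bilinear (cinner :: 'a::complex_inner \<Rightarrow> 'a \<Rightarrow> complex)"
proof
  fix a a' b b' :: 'a and r :: real
  show "cinner (a + a') b = cinner a b + cinner a' b" by (rule cinner_add_left)
  show "cinner a (b + b') = cinner a b + cinner a b'" by (rule cinner_add_right)
  show "cinner (scaleR r a) b = scaleR r (cinner a b)"
    by (simp add: scaleR_scaleC cinner_scaleC_left scaleR_conv_of_real)
  show "cinner a (scaleR r b) = scaleR r (cinner a b)"
    by (simp add: scaleR_scaleC cinner_scaleC_right scaleR_conv_of_real)
  show "\<exists>K. \<forall>a b::'a. norm (cinner a b) \<le> norm a * norm b * K"
    by (rule exI[of _ 1]) (simp add: cinner_cs)
qed

lemma bounded_bilinear_scaleC: "bounded_bilinear (scaleC :: complex \<Rightarrow> 'a::complex_inner \<Rightarrow> 'a)"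
proof
  fix a a' :: complex and b b' :: 'a and r :: real
  show "scaleC (a + a') b = scaleC a b + scaleC a' b" by (rule scaleC_add_left)
  show "scaleC a (b + b') = scaleC a b + scaleC a b'" by (rule scaleC_add_right)
  show "scaleC (scaleR r a) b = scaleR r (scaleC a b)"
    by (simp add: scaleR_scaleC scaleC_scaleC scaleR_conv_of_real)
  show "scaleC a (scaleR r b) = scaleR r (scaleC a b)"
    by (simp add: scaleR_scaleC scaleC_scaleC mult.commute)
  show "\<exists>K. \<forall>(a::complex) (b::'a). norm (scaleC a b) \<le> norm a * norm b * K"
    by (rule exI[of _ 1]) (simp add: norm_scaleC)
qed

lemmas continuous_on_cinner[continuous_intros] = bounded_bilinear.continuous_on[OF bounded_bilinear_cinner]
lemmas continuous_on_scaleC[continuous_intros] = bounded_bilinear.continuous_on[OF bounded_bilinear_scaleC]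
lemmas tendsto_cinner[tendsto_intros] = bounded_bilinear.tendsto[OF bounded_bilinear_cinner]

section \<open>Riesz representation\<close>

lemma riesz:
  fixes g :: "'a::chilbert_space \<Rightarrow> complex"
  assumes add: "\<And>x y. g (x + y) = g x + g y"
    and sc: "\<And>c x. g (scaleC c x) = c * g x"
    and bd: "\<And>x. cmod (g x) \<le> K * norm x"
  shows "\<exists>z. \<forall>x. g x = cinner z x"
proof (cases "\<forall>x. g x = 0")
  case True thus ?thesis by (intro exI[of _ 0]) simp
next
  case False
  then obtain x1 where x1: "g x1 \<noteq> 0" by blast
  have g0: "g 0 = 0" using add[of 0 0] by simp
  have x1n: "x1 \<noteq> 0" using x1 g0 by auto
  have gdiff: "g (x - y) = g x - g y" for x y
    using add[of "x - y" y] by simp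
  have bl: "bounded_linear g"
    by (rule bounded_linear_intro[of _ K]) (auto simp: add sc scaleR_scaleC scaleR_conv_of_real mult.commute bd)
  define S where "S = {Re (g x) | x. norm x \<le> 1}"
  have Sne: "S \<noteq> {}" unfolding S_def by (auto intro: exI[of _ 0])
  have Sbd: "s \<le> K" if "s \<in> S" for s
  proof -
    from that obtain x where "s = Re (g x)" "norm x \<le> 1" unfolding S_def by blast
    moreover have "K \<ge> 0" using bd[of x1] x1 x1n
      by (smt (verit, ccfv_SIG) mult_nonpos_nonneg norm_ge_zero zero_less_norm_iff)
    ultimately show ?thesis using bd[of x] complex_Re_le_cmod[of "g x"]
      by (smt (verit) mult_left_le)
  qed
  have Sbdd: "bdd_above S" by (rule bdd_aboveI[of S K]) (rule Sbd)
  define M where "M = Sup S"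
  have inS: "Re (g x) \<le> M" if "norm x \<le> 1" for x
    unfolding M_def by (rule cSup_upper[OF _ Sbdd]) (use that in \<open>auto simp: S_def\<close>)
  have gle: "cmod (g x) \<le> M * norm x" for x
  proof (cases "x = 0")
    case True thus ?thesis using g0 by simp
  next
    case False
    obtain u where u: "cmod u = 1" "u * g x = complex_of_real (cmod (g x))" using phase_exists by blast
    define y where "y = scaleC (u / complex_of_real (norm x)) x"
    have ny: "norm y = 1" using False u unfolding y_def by (simp add: norm_scaleC norm_divide)
    have "g y = complex_of_real (cmod (g x) / norm x)"
      unfolding y_def sc using u(2) by (simp add: field_simps)
    hence "cmod (g x) / norm x \<le> M" using inS[of y] ny by simp
    thus ?thesis using False by (simp add: divide_le_eq mult.commute)
  qed
  have Mpos: "M > 0"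
  proof -
    have "0 < cmod (g x1)" using x1 by simp
    also have "\<dots> \<le> M * norm x1" by (rule gle)
    finally show ?thesis using x1n by (simp add: zero_less_mult_iff)
  qed
  have "\<forall>n. \<exists>x. norm x \<le> 1 \<and> M - inverse (real (Suc n)) < Re (g x)"
  proof
    fix n
    have "M - inverse (real (Suc n)) < M" by simp
    then obtain s where "s \<in> S" "M - inverse (real (Suc n)) < s" unfolding M_def using Sne by (rule less_cSupE)
    thus "\<exists>x. norm x \<le> 1 \<and> M - inverse (real (Suc n)) < Re (g x)" unfolding S_def by blast
  qed
  then obtain X where X: "\<And>n. norm (X n) \<le> 1" "\<And>n. M - inverse (real (Suc n)) < Re (g (X n))"
    by (metis choice_iff)
  have cauchy: "Cauchy X"
  proof (rule CauchyI)
    fix e :: real assume e: "e > 0"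
    obtain N :: nat where N: "8 / (M * e^2) < real N" using reals_Archimedean2 by blast
    have "norm (X m - X n) < e" if m: "m \<ge> N" and n: "n \<ge> N" for m n
    proof -
      define d where "d = 2 / (M * real (Suc N))"
      have dpos: "d > 0" unfolding d_def using Mpos by simp
      have im: "inverse (real (Suc m)) \<le> inverse (real (Suc N))" using m by (simp add: field_simps)
      have iN: "inverse (real (Suc n)) \<le> inverse (real (Suc N))" using n by (simp add: field_simps)
      have "2 * M - 2 * inverse (real (Suc N)) < Re (g (X m + X n))"
      proof -
        have "Re (g (X m + X n)) = Re (g (X m)) + Re (g (X n))" by (simp add: add)
        thus ?thesis using X(2)[of m] X(2)[of n] im iN by linarith
      qed
      also have "\<dots> \<le> cmod (g (X m + X n))" by (rule complex_Re_le_cmod)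
      also have "\<dots> \<le> M * norm (X m + X n)" by (rule gle)
      finally have "2 * M - 2 * inverse (real (Suc N)) < M * norm (X m + X n)" .
      hence "(2 * M - 2 * inverse (real (Suc N))) / M < norm (X m + X n)"
        using Mpos by (simp add: pos_divide_less_eq mult.commute)
      moreover have "(2 * M - 2 * inverse (real (Suc N))) / M = 2 - d"
        unfolding d_def using Mpos by (simp add: diff_divide_distrib inverse_eq_divide divide_divide_eq_left mult.commute)
      ultimately have s1: "2 - d < norm (X m + X n)" by simp
      have par: "(norm (X m - X n))^2 + (norm (X m + X n))^2 = 2 * (norm (X m))^2 + 2 * (norm (X n))^2"
        by (simp add: norm_sq_add norm_sq_diff)
      have "(norm (X m))^2 \<le> 1" "(norm (X n))^2 \<le> 1" using X(1)[of m] X(1)[of n]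
        by (simp_all add: power_le_one)
      hence par2: "(norm (X m - X n))^2 \<le> 4 - (norm (X m + X n))^2" using par by linarith
      have "(norm (X m - X n))^2 \<le> 4 * d"
      proof (cases "d \<le> 2")
        case True
        hence "(2 - d)^2 \<le> (norm (X m + X n))^2" using s1 by (intro power_mono) auto
        thus ?thesis using par2 by (simp add: power2_eq_square algebra_simps) (smt (verit) dpos mult_pos_pos)
      next
        case False
        thus ?thesis using par2 by (smt (verit) zero_le_power2)
      qed
      also have "4 * d < e^2"
      proof -
        have "8 / (M * e^2) < real (Suc N)" using N by simp
        hence "8 < real (Suc N) * (M * e^2)" using Mpos e by (simp add: divide_less_eq)
        moreover have P: "0 < M * real (Suc N)" using Mpos by simp
        moreover have "4 * d = 8 / (M * real (Suc N))" unfolding d_def by simp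
        ultimately show ?thesis by (simp add: pos_divide_less_eq mult_ac)
      qed
      finally have "(norm (X m - X n))^2 < e^2" .
      thus ?thesis using e by (simp add: power_less_imp_less_base)
    qed
    thus "\<exists>N. \<forall>m\<ge>N. \<forall>n\<ge>N. norm (X m - X n) < e" by blast
  qed
  then obtain z0 where z0: "X \<longlonglongrightarrow> z0" using Cauchy_convergent convergent_def by blast
  have nz0: "norm z0 \<le> 1"
    by (rule LIMSEQ_le_const2[OF tendsto_norm[OF z0]]) (use X(1) in auto)
  have gz: "(\<lambda>n. Re (g (X n))) \<longlonglongrightarrow> Re (g z0)"
    by (intro tendsto_Re bounded_linear.tendsto[OF bl] z0)
  have lowlim: "(\<lambda>n. M - inverse (real (Suc n))) \<longlonglongrightarrow> M"
    using tendsto_diff[OF tendsto_const LIMSEQ_inverse_real_of_nat, of M] by simp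
  have "M \<le> Re (g z0)"
    by (rule LIMSEQ_le[OF lowlim gz]) (use X(2) in \<open>auto intro: less_imp_le\<close>)
  moreover have "Re (g z0) \<le> cmod (g z0)" by (rule complex_Re_le_cmod)
  moreover have "cmod (g z0) \<le> M * norm z0" by (rule gle)
  moreover have "M * norm z0 \<le> M" using nz0 Mpos by (simp add: mult_left_le)
  ultimately have c1: "M \<le> M * norm z0" and ReM: "Re (g z0) = M" and cm: "cmod (g z0) = M"
    by linarith+
  have nz1: "norm z0 = 1" using c1 nz0 Mpos by (simp add: mult_le_cancel_left1)
  have "Im (g z0) = 0"
  proof -
    have "(cmod (g z0))^2 = (Re (g z0))^2 + (Im (g z0))^2" by (rule cmod_power2)
    thus ?thesis using ReM cm by simp
  qed
  hence gz0: "g z0 = complex_of_real M" using ReM by (simp add: complex_eq_iff)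
  have orth: "cinner z0 h = 0" if gh: "g h = 0" for h
  proof -
    define w where "w = cinner z0 h"
    define s where "s = 1 / ((norm h)^2 + 1)"
    have spos: "s > 0" unfolding s_def by (simp add: add_nonneg_pos)
    have sh: "s * (norm h)^2 < 2"
    proof -
      have "(norm h)^2 < 2 * ((norm h)^2 + 1)" by (simp add: add_nonneg_pos)
      thus ?thesis unfolding s_def by (simp add: pos_divide_less_eq add_nonneg_pos)
    qed
    define t where "t = - complex_of_real s * cnj w"
    define z' where "z' = z0 + scaleC t h"
    have "g z' = complex_of_real M" unfolding z'_def add sc gh gz0 by simp
    hence "M \<le> M * norm z'" using gle[of z'] by simp
    hence "1 \<le> norm z'" using Mpos by simp
    hence "1 \<le> (norm z')^2" by (simp add: one_le_power)
    also have "(norm z')^2 = 1 + (cmod t)^2 * (norm h)^2 + 2 * Re (t * w)"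
      unfolding z'_def norm_sq_add norm_scaleC nz1 w_def
      by (simp add: cinner_scaleC_right power_mult_distrib)
    also have "(cmod t)^2 = s^2 * (cmod w)^2" unfolding t_def using spos
      by (simp add: norm_mult power_mult_distrib)
    also have "Re (t * w) = - s * (cmod w)^2"
    proof -
      have cw: "cnj w * w = complex_of_real ((cmod w)^2)" using complex_norm_square[of w] by (simp add: mult.commute)
      have "t * w = - complex_of_real (s * (cmod w)^2)" unfolding t_def using cw
        by (metis mult.assoc mult_minus_left of_real_mult)
      thus ?thesis by simp
    qed
    finally have "0 \<le> s * (cmod w)^2 * (s * (norm h)^2 - 2)" by (simp add: algebra_simps power2_eq_square)
    moreover have "s * (norm h)^2 - 2 < 0" using sh by simp
    ultimately have "s * (cmod w)^2 \<le> 0" using mult_pos_neg[of "s * (cmod w)^2" "s * (norm h)^2 - 2"] by linarith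
    hence "(cmod w)^2 \<le> 0" using spos by (simp add: mult_le_0_iff)
    thus ?thesis unfolding w_def by simp
  qed
  have "g h = cinner (scaleC (complex_of_real M) z0) h" for h
  proof -
    define h' where "h' = h - scaleC (g h / complex_of_real M) z0"
    have "g h' = 0" unfolding h'_def gdiff sc gz0 using Mpos by simp
    hence "cinner z0 h' = 0" by (rule orth)
    hence "cinner z0 h = g h / complex_of_real M * cinner z0 z0"
      unfolding h'_def cinner_diff_right cinner_scaleC_right by simp
    also have "cinner z0 z0 = 1" using nz1 by (simp add: cinner_self_norm)
    finally show ?thesis using Mpos by (simp add: cinner_scaleC_left field_simps)
  qed
  thus ?thesis by blast
qed

section \<open>Adjoints\<close>

lemma adj_exists:
  fixes a :: "'a::chilbert_space \<Rightarrow> 'a"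
  assumes "bounded_clinear a"
  shows "\<exists>b. \<forall>x y. cinner (a x) y = cinner x (b y)"
proof -
  obtain K where K: "K \<ge> 0" "\<And>x. norm (a x) \<le> norm x * K" using bclin_bound[OF assms] by blast
  have "\<forall>y. \<exists>z. \<forall>x. cinner y (a x) = cinner z x"
  proof
    fix y
    show "\<exists>z. \<forall>x. cinner y (a x) = cinner z x"
    proof (rule riesz[where K = "norm y * K"])
      show "cinner y (a (x + x')) = cinner y (a x) + cinner y (a x')" for x x'
        by (simp add: bclinD(1)[OF assms] cinner_add_right)
      show "cinner y (a (scaleC c x)) = c * cinner y (a x)" for c x
        by (simp add: bclinD(2)[OF assms] cinner_scaleC_right)
      show "cmod (cinner y (a x)) \<le> norm y * K * norm x" for x
        using cinner_cs[of y "a x"] K(2)[of x]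
        by (smt (verit, ccfv_SIG) mult.assoc mult.commute mult_left_mono norm_ge_zero)
    qed
  qed
  then obtain b where b: "\<And>y x. cinner y (a x) = cinner (b y) x" by (metis choice_iff)
  have "cinner (a x) y = cinner x (b y)" for x y
    using b[of y x] by (metis cnj_cinner)
  thus ?thesis by blast
qed

lemma adj_unique:
  assumes "\<And>x y. cinner (a x) y = cinner x (b y)" "\<And>x y. cinner (a x) y = cinner x (b' y)"
  shows "b = b'"
proof
  fix y show "b y = b' y"
    by (rule cinner_ext_left[symmetric]) (metis assms cnj_cinner)
qed

lemma cadj_eq_if: "(\<And>x y. cinner (a x) y = cinner x (b y)) \<Longrightarrow> cadj a = b"
  unfolding cadj_def
proof (rule the_equality)
  assume a: "\<And>x y. cinner (a x) y = cinner x (b y)"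
  thus "\<forall>x y. cinner (a x) y = cinner x (b y)" by blast
  fix b' assume "\<forall>x y. cinner (a x) y = cinner x (b' y)"
  thus "b' = b" using adj_unique[of a b' b] a by blast
qed

lemma cadj_prop:
  fixes a :: "'a::chilbert_space \<Rightarrow> 'a"
  assumes "bounded_clinear a"
  shows "cinner (a x) y = cinner x (cadj a y)"
proof -
  obtain b where b: "\<And>x y. cinner (a x) y = cinner x (b y)" using adj_exists[OF assms] by blast
  show ?thesis using cadj_eq_if[OF b] b by simp
qed

lemma cadj_prop2:
  fixes a :: "'a::chilbert_space \<Rightarrow> 'a"
  assumes "bounded_clinear a"
  shows "cinner (cadj a y) x = cinner y (a x)"
  using cadj_prop[OF assms, of x y] by (metis cnj_cinner)

lemma cadj_bclin:
  fixes a :: "'a::chilbert_space \<Rightarrow> 'a"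
  assumes a: "bounded_clinear a"
  shows "bounded_clinear (cadj a)"
proof -
  obtain K where K: "K \<ge> 0" "\<And>x. norm (a x) \<le> norm x * K" using bclin_bound[OF a] by blast
  have add: "cadj a (y + y') = cadj a y + cadj a y'" for y y'
    by (rule cinner_ext) (simp add: cadj_prop[OF a, symmetric] cinner_add_right)
  have sc: "cadj a (scaleC c y) = scaleC c (cadj a y)" for c y
    by (rule cinner_ext) (simp add: cadj_prop[OF a, symmetric] cinner_scaleC_right)
  have bd: "norm (cadj a y) \<le> norm y * K" for y
  proof -
    have "(norm (cadj a y))^2 = Re (cinner (a (cadj a y)) y)"
      by (simp add: norm_sq_cinner cadj_prop[OF a])
    also have "\<dots> \<le> norm (a (cadj a y)) * norm y" by (rule Re_cinner_le)
    also have "\<dots> \<le> norm (cadj a y) * K * norm y" using K(2) by (simp add: mult_right_mono)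
    finally have "(norm (cadj a y))^2 \<le> norm (cadj a y) * (norm y * K)" by (simp add: mult_ac)
    thus ?thesis
      by (cases "norm (cadj a y) = 0") (auto simp: power2_eq_square mult_le_cancel_left_pos K(1))
  qed
  show ?thesis unfolding bounded_clinear_def using add sc bd by blast
qed

section \<open>Orthonormal lists and projections\<close>

fun onl :: "'a::complex_inner list \<Rightarrow> bool" where
  "onl [] = True"
| "onl (e # E) = (norm e = 1 \<and> (\<forall>f\<in>set E. cinner e f = 0) \<and> onl E)"

definition proj :: "'a::complex_inner list \<Rightarrow> 'a \<Rightarrow> 'a" where
  "proj E y = sum_list (map (\<lambda>e. scaleC (cinner e y) e) E)"

lemma proj_Nil[simp]: "proj [] y = 0" by (simp add: proj_def)
lemma proj_Cons: "proj (e # E) y = scaleC (cinner e y) e + proj E y" by (simp add: proj_def)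

lemma proj_add: "proj E (x + y) = proj E x + proj E y"
  by (induction E) (simp_all add: proj_Cons cinner_add_right scaleC_add_left algebra_simps)

lemma proj_scaleC: "proj E (scaleC c x) = scaleC c (proj E x)"
  by (induction E) (simp_all add: proj_Cons cinner_scaleC_right scaleC_add_right scaleC_scaleC)

lemma proj_zero[simp]: "proj E 0 = 0"
  using proj_add[of E 0 0] by simp

lemma proj_minus: "proj E (- x) = - proj E x"
  using proj_scaleC[of E "-1" x] by (simp add: scaleC_minus1)

lemma proj_diff: "proj E (x - y) = proj E x - proj E y"
  by (simp only: diff_conv_add_uminus proj_add proj_minus)

lemma cinner_proj_left: "cinner (proj E z) y = cinner z (proj E y)"
  by (induction E) (simp_all add: proj_Cons cinner_add_left cinner_add_right cinner_scaleC_left cinner_scaleC_right cnj_cinner mult.commute)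

lemma cinner_proj_orth: "(\<forall>g\<in>set E. cinner f g = 0) \<Longrightarrow> cinner f (proj E y) = 0"
  by (induction E) (simp_all add: proj_Cons cinner_add_right cinner_scaleC_right)

lemma cinner_proj_mem: "onl E \<Longrightarrow> e \<in> set E \<Longrightarrow> cinner e (proj E y) = cinner e y"
proof (induction E)
  case Nil thus ?case by simp
next
  case (Cons f E)
  have f1: "cinner f f = 1" using Cons.prems(1) by (simp add: cinner_self_norm)
  show ?case
  proof (cases "e = f")
    case True
    thus ?thesis using Cons.prems(1) f1
      by (simp add: proj_Cons cinner_add_right cinner_scaleC_right cinner_proj_orth)
  next
    case False
    hence eE: "e \<in> set E" using Cons.prems(2) by simp
    have "cinner f e = 0" using Cons.prems(1) eE by simp
    hence "cinner e f = 0" by (metis cnj_cinner complex_cnj_zero)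
    thus ?thesis using Cons.IH Cons.prems(1) eE
      by (simp add: proj_Cons cinner_add_right cinner_scaleC_right)
  qed
qed

lemma proj_idem: "onl E \<Longrightarrow> proj E (proj E y) = proj E y"
proof -
  assume E: "onl E"
  have "map (\<lambda>e. scaleC (cinner e (proj E y)) e) E = map (\<lambda>e. scaleC (cinner e y) e) E"
    by (rule map_cong) (simp_all add: cinner_proj_mem[OF E])
  thus ?thesis by (simp only: proj_def[of E "proj E y"]) (simp only: proj_def[symmetric])
qed

lemma proj_pyth: "onl E \<Longrightarrow> (norm (proj E y))^2 + (norm (y - proj E y))^2 = (norm y)^2"
proof -
  assume E: "onl E"
  have "cinner (proj E y) (y - proj E y) = 0"
    unfolding cinner_diff_right cinner_proj_left[of E y] proj_idem[OF E] by simp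
  hence "(norm (proj E y + (y - proj E y)))^2 = (norm (proj E y))^2 + (norm (y - proj E y))^2"
    by (simp only: norm_sq_add) simp
  thus ?thesis by simp
qed

lemma norm_proj_le: "onl E \<Longrightarrow> norm (proj E y) \<le> norm y"
proof -
  assume E: "onl E"
  have "(norm (proj E y))^2 \<le> (norm y)^2" using proj_pyth[OF E, of y] zero_le_power2[of "norm (y - proj E y)"] by linarith
  thus ?thesis by (rule power2_le_imp_le) simp
qed

lemma proj_bclin: "onl E \<Longrightarrow> bounded_clinear (proj E)"
  unfolding bounded_clinear_def using proj_add proj_scaleC norm_proj_le
  by (metis mult.right_neutral)

lemma onl_norm: "onl E \<Longrightarrow> e \<in> set E \<Longrightarrow> norm e = 1"
  by (induction E) auto

section \<open>Gram-Schmidt\<close>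

lemma gram_schmidt_ex:
  fixes W :: "'a::complex_inner list"
  shows "\<exists>G. onl G \<and> length G \<le> length W \<and> (\<forall>w\<in>set W. proj G w = w)"
proof (induction W)
  case Nil thus ?case by (intro exI[of _ "[]"]) simp
next
  case (Cons w W)
  then obtain G where G: "onl G" "length G \<le> length W" "\<And>v. v \<in> set W \<Longrightarrow> proj G v = v" by blast
  define r where "r = w - proj G w"
  have pr: "proj G r = 0" unfolding r_def by (simp add: proj_diff proj_idem[OF G(1)])
  show ?case
  proof (cases "r = 0")
    case True
    hence "proj G w = w" unfolding r_def by simp
    thus ?thesis using G by (intro exI[of _ G]) auto
  next
    case False
    define g where "g = scaleC (complex_of_real (1 / norm r)) r"
    have ng: "norm g = 1" using False unfolding g_def by (simp add: norm_scaleC norm_divide)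
    have pg: "proj G g = 0" unfolding g_def by (simp add: proj_scaleC pr)
    have orth: "cinner g f = 0" if "f \<in> set G" for f
    proof -
      have "cinner f g = 0" using that G(1) by (simp add: cinner_proj_mem[symmetric] cinner_proj_left[symmetric] pg)
      thus ?thesis by (metis cnj_cinner complex_cnj_zero)
    qed
    have og: "onl (g # G)" using ng orth G(1) by simp
    have "proj (g # G) w = w"
    proof -
      have "cinner r (proj G w) = 0" by (simp add: cinner_proj_left[symmetric] pr)
      moreover have "w = r + proj G w" by (simp add: r_def)
      hence "cinner r w = cinner r r + cinner r (proj G w)" by (metis cinner_add_right)
      ultimately have rw: "cinner r w = complex_of_real ((norm r)^2)"
        by (simp add: cinner_self_norm)
      have "scaleC (cinner g w) g = r"
        unfolding g_def using False
        by (simp add: cinner_scaleC_left scaleC_scaleC rw power2_eq_square scaleC_one flip: of_real_mult)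
      thus ?thesis by (simp add: proj_Cons r_def)
    qed
    moreover have "proj (g # G) v = v" if "v \<in> set W" for v
    proof -
      have "cinner g v = cinner g (proj G v)" using G(3)[OF that] by simp
      also have "\<dots> = 0" by (simp add: cinner_proj_left[symmetric] pg)
      finally show ?thesis using G(3)[OF that] by (simp add: proj_Cons)
    qed
    ultimately show ?thesis using og G(2) by (intro exI[of _ "g # G"]) auto
  qed
qed

section \<open>Compactness of unit balls of finite-dimensional subspaces\<close>

fun bset :: "'a::complex_inner list \<Rightarrow> 'a set" where
  "bset [] = {0}"
| "bset (e # E) = (\<lambda>p. scaleC (fst p) e + snd p) ` (cball 0 1 \<times> bset E)"

lemma compact_bset: "compact (bset E)"
proof (induction E)
  case Nil thus ?case by simp
next
  case (Cons e E)
  have "continuous_on (cball 0 1 \<times> bset E) (\<lambda>p::complex \<times> 'a. scaleC (fst p) e + snd p)"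
    by (intro continuous_intros)
  thus ?case using Cons by (simp add: compact_continuous_image compact_Times)
qed

lemma in_bset: "(\<forall>e\<in>set E. cmod (f e) \<le> 1) \<Longrightarrow> sum_list (map (\<lambda>e. scaleC (f e) e) E) \<in> bset E"
  by (induction E) (auto intro!: image_eqI[where x = "(f _, _)"])

definition ub :: "'a::complex_inner list \<Rightarrow> 'a set" where
  "ub E = {y. norm y \<le> 1 \<and> proj E y = y}"

lemma continuous_proj: "continuous_on UNIV (proj E)"
proof (induction E)
  case Nil thus ?case by (simp add: proj_def[abs_def])
next
  case (Cons e E)
  have "continuous_on UNIV (\<lambda>y. scaleC (cinner e y) e + proj E y)"
    by (intro continuous_intros Cons)
  thus ?case by (simp add: proj_Cons[abs_def])
qed

lemma compact_ub: assumes "onl E" shows "compact (ub E)"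
proof -
  have sub: "ub E \<subseteq> bset E"
  proof
    fix y assume "y \<in> ub E"
    hence y: "norm y \<le> 1" "proj E y = y" unfolding ub_def by auto
    have "\<forall>e\<in>set E. cmod (cinner e y) \<le> 1"
      using cinner_cs onl_norm[OF assms] y(1) by (metis mult_1 order_trans)
    hence "proj E y \<in> bset E" unfolding proj_def by (rule in_bset)
    thus "y \<in> bset E" using y by simp
  qed
  have cl: "closed (cball 0 1 \<inter> {y. proj E y = y})"
    by (intro closed_Int closed_cball closed_Collect_eq continuous_proj continuous_on_id)
  have "ub E = (cball 0 1 \<inter> {y. proj E y = y}) \<inter> bset E"
    using sub unfolding ub_def by auto
  thus ?thesis using closed_Int_compact[OF cl compact_bset] by simp
qed

lemma ub_ne: "0 \<in> ub E" unfolding ub_def by simp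

section \<open>Functionals and tensor equivalence\<close>

definition clin :: "('a::complex_inner \<Rightarrow> complex) \<Rightarrow> bool" where
  "clin g \<longleftrightarrow> (\<forall>x y. g (x + y) = g x + g y) \<and> (\<forall>c x. g (scaleC c x) = c * g x)"

definition aclin :: "('a::complex_inner \<Rightarrow> complex) \<Rightarrow> bool" where
  "aclin g \<longleftrightarrow> (\<forall>x y. g (x + y) = g x + g y) \<and> (\<forall>c x. g (scaleC c x) = cnj c * g x)"

definition SL :: "('a \<Rightarrow> complex) \<Rightarrow> ('a \<Rightarrow> complex) \<Rightarrow> ('a \<times> 'a) list \<Rightarrow> complex" where
  "SL \<phi> \<psi> L = sum_list (map (\<lambda>p. \<phi> (fst p) * \<psi> (snd p)) L)"

definition teq :: "('a::complex_inner \<times> 'a) list \<Rightarrow> ('a \<times> 'a) list \<Rightarrow> bool" where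
  "teq L L' \<longleftrightarrow> (\<forall>\<phi> \<psi>. aclin \<phi> \<longrightarrow> clin \<psi> \<longrightarrow> SL \<phi> \<psi> L = SL \<phi> \<psi> L')"

lemma SL_Cons: "SL \<phi> \<psi> (p # L) = \<phi> (fst p) * \<psi> (snd p) + SL \<phi> \<psi> L"
  by (simp add: SL_def)

lemma clin_add: "clin g \<Longrightarrow> g (x + y) = g x + g y" unfolding clin_def by blast
lemma clin_scaleC: "clin g \<Longrightarrow> g (scaleC c x) = c * g x" unfolding clin_def by blast
lemma aclin_add: "aclin g \<Longrightarrow> g (x + y) = g x + g y" unfolding aclin_def by blast
lemma aclin_scaleC: "aclin g \<Longrightarrow> g (scaleC c x) = cnj c * g x" unfolding aclin_def by blast
lemma clin_zero: "clin g \<Longrightarrow> g 0 = 0" using clin_scaleC[of g 0 0] by simp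
lemma aclin_zero: "aclin g \<Longrightarrow> g 0 = 0" using aclin_scaleC[of g 0 0] by simp

lemma clin_comb: "clin g \<Longrightarrow> g (sum_list (map (\<lambda>p. scaleC (f p) (h p)) L)) = sum_list (map (\<lambda>p. f p * g (h p)) L)"
  by (induction L) (simp_all add: clin_zero clin_add clin_scaleC)

lemma aclin_comb: "aclin g \<Longrightarrow> g (sum_list (map (\<lambda>p. scaleC (f p) (h p)) L)) = sum_list (map (\<lambda>p. cnj (f p) * g (h p)) L)"
  by (induction L) (simp_all add: aclin_zero aclin_add aclin_scaleC)

lemma sum_list_swap:
  "sum_list (map (\<lambda>p. sum_list (map (\<lambda>e. f p e) E)) L) = sum_list (map (\<lambda>e. sum_list (map (\<lambda>p. f p e) L)) E)"
  for f :: "'b \<Rightarrow> 'c \<Rightarrow> 'd::comm_monoid_add"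
proof (induction L)
  case Nil thus ?case by (induction E) simp_all
next
  case (Cons q L)
  thus ?case by (simp add: sum_list_addf)
qed

lemma teq_refl: "teq L L" unfolding teq_def by blast
lemma teq_trans: "teq L1 L2 \<Longrightarrow> teq L2 L3 \<Longrightarrow> teq L1 L3" unfolding teq_def by metis

section \<open>Sesquilinear form attached to a list of pairs\<close>

definition Bf :: "('a::complex_inner \<times> 'a) list \<Rightarrow> 'a \<Rightarrow> 'a \<Rightarrow> complex" where
  "Bf L w z = sum_list (map (\<lambda>p. cinner (fst p) w * cinner z (snd p)) L)"

definition Sop :: "('a::complex_inner \<times> 'a) list \<Rightarrow> 'a \<Rightarrow> 'a" where
  "Sop L w = sum_list (map (\<lambda>p. scaleC (cinner (fst p) w) (snd p)) L)"

definition Sadj :: "('a::complex_inner \<times> 'a) list \<Rightarrow> 'a \<Rightarrow> 'a" where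
  "Sadj L z = sum_list (map (\<lambda>p. scaleC (cinner (snd p) z) (fst p)) L)"

definition fL :: "('a::complex_inner \<times> 'a) list \<Rightarrow> ('a \<Rightarrow> 'a) \<Rightarrow> complex" where
  "fL L x = sum_list (map (\<lambda>p. cinner (fst p) (x (snd p))) L)"

definition cost :: "('a::complex_inner \<times> 'a) list \<Rightarrow> real" where
  "cost L = sum_list (map (\<lambda>p. (norm (fst p))^2) L)"

definition bal :: "('a::complex_inner \<times> 'a) list \<Rightarrow> bool" where
  "bal L \<longleftrightarrow> (\<forall>p\<in>set L. norm (fst p) = norm (snd p))"

lemma Bf_Sop: "Bf L w z = cinner z (Sop L w)"
  unfolding Bf_def Sop_def cinner_sum_list_right by (simp add: cinner_scaleC_right)

lemma Bf_Sadj: "Bf L w z = cinner (Sadj L z) w"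
  unfolding Bf_def Sadj_def cinner_sum_list_left by (simp add: cinner_scaleC_left cnj_cinner mult.commute)

lemma proj_comb:
  "(\<forall>p\<in>set L. proj E (h p) = h p) \<Longrightarrow>
    proj E (sum_list (map (\<lambda>p. scaleC (f p) (h p)) L)) = sum_list (map (\<lambda>p. scaleC (f p) (h p)) L)"
  by (induction L) (simp_all add: proj_add proj_scaleC)

lemma Sop_fix: "(\<forall>p\<in>set L. proj E (snd p) = snd p) \<Longrightarrow> proj E (Sop L w) = Sop L w"
  unfolding Sop_def by (rule proj_comb) simp

lemma Sadj_fix: "(\<forall>p\<in>set L. proj E (fst p) = fst p) \<Longrightarrow> proj E (Sadj L z) = Sadj L z"
  unfolding Sadj_def by (rule proj_comb) simp

lemma Bf_scaleC_right: "Bf L w (scaleC c z) = cnj c * Bf L w z"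
  by (simp add: Bf_Sop cinner_scaleC_left)

lemma continuous_Bf: "continuous_on UNIV (\<lambda>q::'a::complex_inner \<times> 'a. Bf L (fst q) (snd q))"
proof (induction L)
  case Nil thus ?case by (simp add: Bf_def)
next
  case (Cons p L)
  have "continuous_on UNIV (\<lambda>q::'a \<times> 'a. cinner (fst p) (fst q) * cinner (snd q) (snd p) + Bf L (fst q) (snd q))"
    by (intro continuous_intros Cons)
  thus ?case by (simp add: Bf_def)
qed

lemma cinner_normalized: "cinner (scaleC (complex_of_real (1 / norm y)) y) y = complex_of_real (norm y)"
proof -
  have "cinner (scaleC (complex_of_real (1 / norm y)) y) y = complex_of_real (1 / norm y * (norm y)^2)"
    by (simp add: cinner_scaleC_left cinner_self_norm del: of_real_power)
  also have "1 / norm y * (norm y)^2 = norm y" by (simp add: power2_eq_square)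
  finally show ?thesis .
qed

lemma ub_scaleC: "z \<in> ub E \<Longrightarrow> cmod c \<le> 1 \<Longrightarrow> scaleC c z \<in> ub E"
  unfolding ub_def by (auto simp: norm_scaleC proj_scaleC intro: mult_le_one)

lemma max_props:
  fixes L :: "('a::complex_inner \<times> 'a) list"
  assumes E: "onl E" and E': "onl E'"
    and fixL: "\<forall>p\<in>set L. proj E (fst p) = fst p \<and> proj E' (snd p) = snd p"
  obtains a b where "a \<in> ub E" "b \<in> ub E'" "Re (Bf L a b) \<ge> 0"
    "\<And>w. w \<in> ub E \<Longrightarrow> norm (Sop L w) \<le> Re (Bf L a b)"
    "Sop L a = scaleC (complex_of_real (Re (Bf L a b))) b"
    "Sadj L b = scaleC (complex_of_real (Re (Bf L a b))) a"
proof -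
  have cpt: "compact (ub E \<times> ub E')" using compact_ub[OF E] compact_ub[OF E'] by (rule compact_Times)
  have ne: "ub E \<times> ub E' \<noteq> {}" using ub_ne by blast
  have cont: "continuous_on (ub E \<times> ub E') (\<lambda>q. Re (Bf L (fst q) (snd q)))"
    by (intro continuous_intros continuous_on_subset[OF continuous_Bf]) simp
  obtain q where q: "q \<in> ub E \<times> ub E'" "\<And>q'. q' \<in> ub E \<times> ub E' \<Longrightarrow> Re (Bf L (fst q') (snd q')) \<le> Re (Bf L (fst q) (snd q))"
    using continuous_attains_sup[OF cpt ne cont] by blast
  define a where "a = fst q"
  define b where "b = snd q"
  define \<sigma> where "\<sigma> = Re (Bf L a b)"
  have a: "a \<in> ub E" and b: "b \<in> ub E'" using q(1) unfolding a_def b_def by auto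
  have maxi: "Re (Bf L w z) \<le> \<sigma>" if "w \<in> ub E" "z \<in> ub E'" for w z
    using q(2)[of "(w, z)"] that unfolding \<sigma>_def a_def b_def by auto
  have sig0: "\<sigma> \<ge> 0" using maxi[OF ub_ne ub_ne] by (simp add: Bf_def)
  have cm: "cmod (Bf L w z) \<le> \<sigma>" if w: "w \<in> ub E" and z: "z \<in> ub E'" for w z
  proof -
    obtain u where u: "cmod u = 1" "u * Bf L w z = complex_of_real (cmod (Bf L w z))" using phase_exists by blast
    have "Bf L w (scaleC (cnj u) z) = complex_of_real (cmod (Bf L w z))"
      by (simp add: Bf_scaleC_right u(2))
    moreover have "scaleC (cnj u) z \<in> ub E'" using z u(1) by (intro ub_scaleC) auto
    ultimately show ?thesis using maxi[OF w] by fastforce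
  qed
  have nS: "norm (Sop L w) \<le> \<sigma>" if w: "w \<in> ub E" for w
  proof (cases "Sop L w = 0")
    case True thus ?thesis using sig0 by simp
  next
    case False
    define z where "z = scaleC (complex_of_real (1 / norm (Sop L w))) (Sop L w)"
    have "z \<in> ub E'" unfolding z_def ub_def using False
      by (simp add: norm_scaleC norm_divide proj_scaleC Sop_fix fixL)
    moreover have "Bf L w z = complex_of_real (norm (Sop L w))"
      unfolding Bf_Sop z_def by (metis cinner_normalized cnj_cinner complex_cnj_complex_of_real)
    ultimately show ?thesis using cm[OF w] by fastforce
  qed
  have nSa: "norm (Sadj L z) \<le> \<sigma>" if z: "z \<in> ub E'" for z
  proof (cases "Sadj L z = 0")
    case True thus ?thesis using sig0 by simp
  next
    case False
    define w where "w = scaleC (complex_of_real (1 / norm (Sadj L z))) (Sadj L z)"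
    have "w \<in> ub E" unfolding w_def ub_def using False
      by (simp add: norm_scaleC norm_divide proj_scaleC Sadj_fix fixL)
    moreover have "Bf L w z = complex_of_real (norm (Sadj L z))"
      unfolding Bf_Sadj w_def by (metis cinner_normalized cnj_cinner complex_cnj_complex_of_real)
    ultimately show ?thesis using cm[OF _ z] by fastforce
  qed
  have na: "norm a \<le> 1" and nb: "norm b \<le> 1" using a b unfolding ub_def by auto
  have eq1: "Sop L a = scaleC (complex_of_real \<sigma>) b"
  proof -
    have r: "Re (cinner (Sop L a) b) = \<sigma>" unfolding \<sigma>_def Bf_Sop
      by (metis cnj.sel(1) cnj_cinner)
    have "(norm (Sop L a - scaleC (complex_of_real \<sigma>) b))^2
        = (norm (Sop L a))^2 + (\<sigma> * norm b)^2 - 2 * (\<sigma> * Re (cinner (Sop L a) b))"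
      using sig0 by (simp add: norm_sq_diff norm_scaleC cinner_scaleC_right)
    also have "\<dots> \<le> \<sigma>^2 + \<sigma>^2 - 2 * \<sigma>^2" unfolding r
      using nS[OF a] sig0 nb
      by (intro add_mono diff_mono power_mono) (auto simp: power2_eq_square mult_left_le)
    finally show ?thesis by simp
  qed
  have eq2: "Sadj L b = scaleC (complex_of_real \<sigma>) a"
  proof -
    have r: "Re (cinner (Sadj L b) a) = \<sigma>" unfolding \<sigma>_def Bf_Sadj ..
    have "(norm (Sadj L b - scaleC (complex_of_real \<sigma>) a))^2
        = (norm (Sadj L b))^2 + (\<sigma> * norm a)^2 - 2 * (\<sigma> * Re (cinner (Sadj L b) a))"
      using sig0 by (simp add: norm_sq_diff norm_scaleC cinner_scaleC_right)
    also have "\<dots> \<le> \<sigma>^2 + \<sigma>^2 - 2 * \<sigma>^2" unfolding r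
      using nSa[OF b] sig0 na
      by (intro add_mono diff_mono power_mono) (auto simp: power2_eq_square mult_left_le)
    finally show ?thesis by simp
  qed
  show ?thesis using that[OF a b sig0[unfolded \<sigma>_def]] nS eq1 eq2 unfolding \<sigma>_def by blast
qed

definition qa :: "'a::complex_inner \<Rightarrow> 'a \<Rightarrow> 'a" where
  "qa a h = h - scaleC (cinner a h) a"

lemma qa_add: "qa a (x + y) = qa a x + qa a y"
  unfolding qa_def by (simp add: cinner_add_right scaleC_add_left algebra_simps)

lemma qa_scaleC: "qa a (scaleC c x) = scaleC c (qa a x)"
  unfolding qa_def by (simp add: cinner_scaleC_right scaleC_diff_right scaleC_scaleC)

lemma cinner_qa: "norm a = 1 \<Longrightarrow> cinner a (qa a h) = 0"
  unfolding qa_def by (simp add: cinner_diff_right cinner_scaleC_right cinner_self_norm)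

lemma qa_self: "norm a = 1 \<Longrightarrow> qa a a = 0"
  unfolding qa_def by (simp add: cinner_self_norm scaleC_one)

lemma qa_adj: "cinner (qa a x) y = cinner x (qa a y)"
  unfolding qa_def cinner_diff_left cinner_diff_right cinner_scaleC_left cinner_scaleC_right cnj_cinner
  by (simp add: mult.commute)

lemma qa_decomp: "h = qa a h + scaleC (cinner a h) a"
  unfolding qa_def by simp

lemma orth_norm: "norm a = 1 \<Longrightarrow> cinner a v = 0 \<Longrightarrow> (norm (scaleC c a + v))^2 = (cmod c)^2 + (norm v)^2"
  by (simp add: norm_sq_add norm_scaleC cinner_scaleC_left)

lemma qa_pyth: "norm a = 1 \<Longrightarrow> (norm h)^2 = (cmod (cinner a h))^2 + (norm (qa a h))^2"
proof -
  assume a: "norm a = 1"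
  have "h = scaleC (cinner a h) a + qa a h" using qa_decomp[of h a] by (simp add: add.commute)
  hence "(norm h)^2 = (norm (scaleC (cinner a h) a + qa a h))^2" by simp
  also have "\<dots> = (cmod (cinner a h))^2 + (norm (qa a h))^2" by (rule orth_norm[OF a cinner_qa[OF a]])
  finally show ?thesis .
qed

lemma norm_qa_le: "norm a = 1 \<Longrightarrow> norm (qa a h) \<le> norm h"
proof -
  assume a: "norm a = 1"
  have "(norm (qa a h))^2 \<le> (norm h)^2" using qa_pyth[OF a, of h] zero_le_power2[of "cmod (cinner a h)"] by linarith
  thus ?thesis by (rule power2_le_imp_le) simp
qed

lemma qa_bclin: "norm a = 1 \<Longrightarrow> bounded_clinear (qa a)"
  unfolding bounded_clinear_def using qa_add qa_scaleC norm_qa_le by (metis mult.right_neutral)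

lemma onl_proj_mem: "onl E \<Longrightarrow> e \<in> set E \<Longrightarrow> proj E e = e"
proof (induction E)
  case Nil thus ?case by simp
next
  case (Cons f E)
  show ?case
  proof (cases "e = f")
    case True
    have "\<forall>g\<in>set E. cinner g f = 0" using Cons.prems(1) by (metis cnj_cinner complex_cnj_zero onl.simps(2))
    hence "proj E f = 0" by (induction E) (simp_all add: proj_Cons)
    moreover have "cinner f f = 1" using Cons.prems(1) by (simp add: cinner_self_norm)
    ultimately show ?thesis using True by (simp add: proj_Cons scaleC_one)
  next
    case False
    hence eE: "e \<in> set E" using Cons.prems(2) by simp
    have "cinner f e = 0" using Cons.prems(1) eE by simp
    thus ?thesis using Cons.IH Cons.prems(1) eE by (simp add: proj_Cons)
  qed
qed

lemma ub_mem: "onl E \<Longrightarrow> e \<in> set E \<Longrightarrow> e \<in> ub E"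
  unfolding ub_def using onl_norm onl_proj_mem by fastforce

lemma sum_list_zero_on: "(\<And>x. x \<in> set xs \<Longrightarrow> f x = (0::'b::comm_monoid_add)) \<Longrightarrow> sum_list (map f xs) = 0"
  by (induction xs) simp_all

lemma zero_case:
  fixes L :: "('a::complex_inner \<times> 'a) list"
  assumes E: "onl E" and fixL: "\<forall>p\<in>set L. proj E (fst p) = fst p"
    and z: "\<And>w. w \<in> ub E \<Longrightarrow> Sop L w = 0"
  shows "teq L []"
  unfolding teq_def
proof (intro allI impI)
  fix \<phi> \<psi> :: "'a \<Rightarrow> complex" assume \<phi>: "aclin \<phi>" and \<psi>: "clin \<psi>"
  have "SL \<phi> \<psi> L = sum_list (map (\<lambda>p. sum_list (map (\<lambda>e. cinner (fst p) e * \<phi> e * \<psi> (snd p)) E)) L)"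
    unfolding SL_def
  proof (rule arg_cong[where f = sum_list], rule map_cong[OF refl])
    fix p assume "p \<in> set L"
    hence "\<phi> (fst p) = \<phi> (proj E (fst p))" using fixL by simp
    also have "\<dots> = sum_list (map (\<lambda>e. cinner (fst p) e * \<phi> e) E)"
      unfolding proj_def by (simp add: aclin_comb[OF \<phi>] cnj_cinner)
    finally show "\<phi> (fst p) * \<psi> (snd p) = sum_list (map (\<lambda>e. cinner (fst p) e * \<phi> e * \<psi> (snd p)) E)"
      by (simp add: sum_list_mult_const)
  qed
  also have "\<dots> = sum_list (map (\<lambda>e. sum_list (map (\<lambda>p. cinner (fst p) e * \<phi> e * \<psi> (snd p)) L)) E)"
    by (rule sum_list_swap)
  also have "\<dots> = sum_list (map (\<lambda>e. \<phi> e * \<psi> (Sop L e)) E)"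
    unfolding Sop_def clin_comb[OF \<psi>] by (simp add: sum_list_const_mult mult_ac)
  also have "\<dots> = 0"
    by (rule sum_list_zero_on) (simp add: z ub_mem[OF E] clin_zero[OF \<psi>])
  finally show "SL \<phi> \<psi> L = SL \<phi> \<psi> []" by (simp add: SL_def)
qed

lemma qa_comb: "qa a (sum_list (map (\<lambda>p. scaleC (f p) (h p)) L)) = sum_list (map (\<lambda>p. scaleC (f p) (qa a (h p))) L)"
  by (induction L) (simp_all add: qa_add qa_scaleC, simp add: qa_def)

lemma teq_cons: "teq L L' \<Longrightarrow> teq (p # L) (p # L')"
  unfolding teq_def by (simp add: SL_Cons)

lemma teq_step:
  fixes L :: "('a::complex_inner \<times> 'a) list"
  assumes na: "norm a = 1" and nb: "norm b = 1"
    and S1: "Sop L a = scaleC (complex_of_real \<sigma>) b"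
    and S2: "Sadj L b = scaleC (complex_of_real \<sigma>) a"
    and sig: "\<sigma> \<ge> 0" and Bab: "Bf L a b = complex_of_real \<sigma>"
  shows "teq L ((scaleC (complex_of_real (sqrt \<sigma>)) a, scaleC (complex_of_real (sqrt \<sigma>)) b)
                 # map (\<lambda>p. (qa a (fst p), qa b (snd p))) L)"
  unfolding teq_def
proof (intro allI impI)
  fix \<phi> \<psi> :: "'a \<Rightarrow> complex" assume \<phi>: "aclin \<phi>" and \<psi>: "clin \<psi>"
  have pe: "\<phi> (fst p) * \<psi> (snd p) = \<phi> (qa a (fst p)) * \<psi> (qa b (snd p))
      + \<psi> b * (cinner b (snd p) * \<phi> (qa a (fst p)))
      + \<phi> a * (cinner (fst p) a * \<psi> (qa b (snd p)))
      + \<phi> a * \<psi> b * (cinner (fst p) a * cinner b (snd p))" for p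
  proof -
    have "\<phi> (fst p) = \<phi> (qa a (fst p) + scaleC (cinner a (fst p)) a)" using qa_decomp[of "fst p" a] by simp
    also have "\<dots> = \<phi> (qa a (fst p)) + cinner (fst p) a * \<phi> a"
      by (simp add: aclin_add[OF \<phi>] aclin_scaleC[OF \<phi>] cnj_cinner)
    finally have 1: "\<phi> (fst p) = \<phi> (qa a (fst p)) + cinner (fst p) a * \<phi> a" .
    have "\<psi> (snd p) = \<psi> (qa b (snd p) + scaleC (cinner b (snd p)) b)" using qa_decomp[of "snd p" b] by simp
    also have "\<dots> = \<psi> (qa b (snd p)) + cinner b (snd p) * \<psi> b"
      by (simp add: clin_add[OF \<psi>] clin_scaleC[OF \<psi>])
    finally have 2: "\<psi> (snd p) = \<psi> (qa b (snd p)) + cinner b (snd p) * \<psi> b" .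
    show ?thesis unfolding 1 2 by (simp add: algebra_simps)
  qed
  have T2: "sum_list (map (\<lambda>p. cinner b (snd p) * \<phi> (qa a (fst p))) L) = 0"
  proof -
    have "sum_list (map (\<lambda>p. cinner b (snd p) * \<phi> (qa a (fst p))) L)
        = \<phi> (sum_list (map (\<lambda>p. scaleC (cinner (snd p) b) (qa a (fst p))) L))"
      by (simp add: aclin_comb[OF \<phi>] cnj_cinner)
    also have "\<dots> = \<phi> (qa a (Sadj L b))" unfolding Sadj_def qa_comb ..
    also have "\<dots> = 0" unfolding S2 qa_scaleC qa_self[OF na] by (simp add: aclin_zero[OF \<phi>])
    finally show ?thesis .
  qed
  have T3: "sum_list (map (\<lambda>p. cinner (fst p) a * \<psi> (qa b (snd p))) L) = 0"
  proof -
    have "sum_list (map (\<lambda>p. cinner (fst p) a * \<psi> (qa b (snd p))) L)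
        = \<psi> (sum_list (map (\<lambda>p. scaleC (cinner (fst p) a) (qa b (snd p))) L))"
      by (simp add: clin_comb[OF \<psi>])
    also have "\<dots> = \<psi> (qa b (Sop L a))" unfolding Sop_def qa_comb ..
    also have "\<dots> = 0" unfolding S1 qa_scaleC qa_self[OF nb] by (simp add: clin_zero[OF \<psi>])
    finally show ?thesis .
  qed
  have T4: "sum_list (map (\<lambda>p. cinner (fst p) a * cinner b (snd p)) L) = complex_of_real \<sigma>"
    using Bab unfolding Bf_def .
  have "SL \<phi> \<psi> L = SL \<phi> \<psi> (map (\<lambda>p. (qa a (fst p), qa b (snd p))) L)
      + \<psi> b * sum_list (map (\<lambda>p. cinner b (snd p) * \<phi> (qa a (fst p))) L)
      + \<phi> a * sum_list (map (\<lambda>p. cinner (fst p) a * \<psi> (qa b (snd p))) L)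
      + \<phi> a * \<psi> b * sum_list (map (\<lambda>p. cinner (fst p) a * cinner b (snd p)) L)"
  proof -
    have "SL \<phi> \<psi> L = sum_list (map (\<lambda>p. \<phi> (qa a (fst p)) * \<psi> (qa b (snd p))
      + \<psi> b * (cinner b (snd p) * \<phi> (qa a (fst p)))
      + \<phi> a * (cinner (fst p) a * \<psi> (qa b (snd p)))
      + \<phi> a * \<psi> b * (cinner (fst p) a * cinner b (snd p))) L)"
      unfolding SL_def by (rule arg_cong[where f = sum_list], rule map_cong[OF refl], rule pe)
    thus ?thesis by (simp add: sum_list_addf sum_list_const_mult o_def SL_def)
  qed
  also have "\<dots> = SL \<phi> \<psi> (map (\<lambda>p. (qa a (fst p), qa b (snd p))) L) + \<phi> a * \<psi> b * complex_of_real \<sigma>"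
    unfolding T2 T3 T4 by simp
  also have "\<phi> a * \<psi> b * complex_of_real \<sigma>
      = \<phi> (scaleC (complex_of_real (sqrt \<sigma>)) a) * \<psi> (scaleC (complex_of_real (sqrt \<sigma>)) b)"
  proof -
    have "complex_of_real (sqrt \<sigma>) * complex_of_real (sqrt \<sigma>) = complex_of_real \<sigma>"
      using sig by (simp flip: of_real_mult)
    thus ?thesis by (simp add: aclin_scaleC[OF \<phi>] clin_scaleC[OF \<psi>] mult_ac)
  qed
  finally show "SL \<phi> \<psi> L = SL \<phi> \<psi> ((scaleC (complex_of_real (sqrt \<sigma>)) a, scaleC (complex_of_real (sqrt \<sigma>)) b)
                 # map (\<lambda>p. (qa a (fst p), qa b (snd p))) L)"
    by (simp add: SL_Cons add.commute)
qed

lemma proj_fix_comb: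
  assumes "\<And>f. f \<in> set E \<Longrightarrow> proj G (h f) = h f" and "bounded_clinear h" and "proj E y = y"
  shows "proj G (h y) = h y"
proof -
  have "h y = h (proj E y)" using assms(3) by simp
  also have "\<dots> = sum_list (map (\<lambda>f. scaleC (cinner f y) (h f)) E)"
    unfolding proj_def by (simp add: bclin_sum_list[OF assms(2)] bclinD(2)[OF assms(2)])
  finally have hy: "h y = sum_list (map (\<lambda>f. scaleC (cinner f y) (h f)) E)" .
  show ?thesis unfolding hy by (rule proj_comb) (use assms(1) in blast)
qed

lemma exists_nonorth:
  assumes "proj E a = a" "a \<noteq> 0"
  shows "\<exists>e\<in>set E. cinner e a \<noteq> 0"
proof (rule ccontr)
  assume "\<not> ?thesis"
  hence "proj E a = 0" unfolding proj_def by (intro sum_list_zero_on) auto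
  thus False using assms by simp
qed

lemma split_fix:
  fixes a :: "'a::complex_inner"
  assumes E: "onl E" and na: "norm a = 1" and aE: "proj E a = a"
  obtains G where "onl G" "length G < length E" "\<And>y. proj E y = y \<Longrightarrow> proj G (qa a y) = qa a y"
proof -
  obtain e where e: "e \<in> set E" "cinner e a \<noteq> 0" using exists_nonorth[OF aE] na by fastforce
  obtain E1 E2 where E12: "E = E1 @ e # E2" using split_list[OF e(1)] by blast
  obtain G where G: "onl G" "length G \<le> length (map (qa a) (E1 @ E2))"
      "\<And>w. w \<in> set (map (qa a) (E1 @ E2)) \<Longrightarrow> proj G w = w"
    using gram_schmidt_ex by blast
  have len: "length G < length E" using G(2) E12 by simp
  have fix12: "proj G (qa a f) = qa a f" if "f \<in> set E1 \<or> f \<in> set E2" for f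
    using G(3) that by auto
  have fixe: "proj G (qa a e) = qa a e"
  proof -
    define s1 where "s1 = sum_list (map (\<lambda>f. scaleC (cinner f a) (qa a f)) E1)"
    define s2 where "s2 = sum_list (map (\<lambda>f. scaleC (cinner f a) (qa a f)) E2)"
    have "0 = qa a (proj E a)" using aE qa_self[OF na] by simp
    also have "\<dots> = s1 + scaleC (cinner e a) (qa a e) + s2"
      unfolding proj_def qa_comb s1_def s2_def E12 by simp
    finally have "scaleC (cinner e a) (qa a e) = - (s1 + s2)" by (simp add: algebra_simps eq_neg_iff_add_eq_0)
    moreover have "qa a e = scaleC (inverse (cinner e a)) (scaleC (cinner e a) (qa a e))"
      using e(2) by (simp add: scaleC_scaleC scaleC_one)
    ultimately have "qa a e = scaleC (inverse (cinner e a)) (- (s1 + s2))" by simp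
    moreover have "proj G s1 = s1" unfolding s1_def by (rule proj_comb) (use fix12 in auto)
    moreover have "proj G s2 = s2" unfolding s2_def by (rule proj_comb) (use fix12 in auto)
    ultimately show ?thesis by (simp add: proj_scaleC proj_add proj_minus proj_diff)
  qed
  have "proj G (qa a y) = qa a y" if "proj E y = y" for y
  proof (rule proj_fix_comb[OF _ qa_bclin[OF na] that])
    fix f assume "f \<in> set E"
    thus "proj G (qa a f) = qa a f" using fix12 fixe E12 by auto
  qed
  thus ?thesis using that G(1) len by blast
qed

lemma fix_any:
  fixes b :: "'a::complex_inner"
  assumes nb: "norm b = 1"
  obtains G where "onl G" "\<And>y. proj E y = y \<Longrightarrow> proj G (qa b y) = qa b y"
proof -
  obtain G where G: "onl G" "\<And>w. w \<in> set (map (qa b) E) \<Longrightarrow> proj G w = w"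
    using gram_schmidt_ex by blast
  have "proj G (qa b y) = qa b y" if "proj E y = y" for y
    by (rule proj_fix_comb[OF _ qa_bclin[OF nb] that]) (use G(2) in auto)
  thus ?thesis using that G(1) by blast
qed

lemma TD:
  fixes L :: "('a::complex_inner \<times> 'a) list"
  assumes "onl E" "onl E'" "\<forall>p\<in>set L. proj E (fst p) = fst p \<and> proj E' (snd p) = snd p"
  shows "\<exists>L2 x. teq L L2 \<and> bal L2 \<and> bounded_clinear x \<and> (\<forall>h. norm (x h) \<le> norm h) \<and> cost L2 \<le> Re (fL L x)"
  using assms
proof (induction "length E" arbitrary: E E' L rule: less_induct)
  case less
  note E = less.prems(1) and E' = less.prems(2) and fixL = less.prems(3)
  obtain a b where a: "a \<in> ub E" and b: "b \<in> ub E'" and sig0: "Re (Bf L a b) \<ge> 0"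
    and nS: "\<And>w. w \<in> ub E \<Longrightarrow> norm (Sop L w) \<le> Re (Bf L a b)"
    and S1: "Sop L a = scaleC (complex_of_real (Re (Bf L a b))) b"
    and S2: "Sadj L b = scaleC (complex_of_real (Re (Bf L a b))) a"
    using max_props[OF E E' fixL] by blast
  define \<sigma> where "\<sigma> = Re (Bf L a b)"
  note sig0 = sig0[folded \<sigma>_def] and nS = nS[folded \<sigma>_def]
    and S1 = S1[folded \<sigma>_def] and S2 = S2[folded \<sigma>_def]
  show ?case
  proof (cases "\<sigma> = 0")
    case True
    have "Sop L w = 0" if "w \<in> ub E" for w using nS[OF that] True by simp
    hence "teq L []" using zero_case[OF E] fixL by blast
    moreover have "fL L (\<lambda>h. 0) = 0" unfolding fL_def by (rule sum_list_zero_on) simp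
    moreover have "bounded_clinear (\<lambda>h::'a. 0::'a)" unfolding bounded_clinear_def
      by (intro conjI allI exI[of _ 0]) simp_all
    ultimately show ?thesis by (intro exI[of _ "[]"] exI[of _ "\<lambda>h. 0"]) (simp add: bal_def cost_def)
  next
    case False
    hence spos: "\<sigma> > 0" using sig0 by simp
    have Bab1: "Bf L a b = complex_of_real \<sigma> * cinner b b"
      unfolding Bf_Sop S1 by (simp add: cinner_scaleC_right)
    have Bab2: "Bf L a b = complex_of_real \<sigma> * cinner a a"
      unfolding Bf_Sadj S2 by (simp add: cinner_scaleC_left)
    have "\<sigma> = Re (Bf L a b)" by (simp add: \<sigma>_def)
    also have "\<dots> = Re (complex_of_real (\<sigma> * (norm b)^2))" unfolding Bab1 cinner_self_norm of_real_mult ..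
    finally have "\<sigma> * 1 = \<sigma> * (norm b)^2" by simp
    hence "(norm b)^2 = 1" using spos by (simp only: mult_cancel_left) simp
    hence nb: "norm b = 1" using norm_ge_zero[of b] by (simp add: power2_eq_1_iff)
    have "\<sigma> = Re (Bf L a b)" by (simp add: \<sigma>_def)
    also have "\<dots> = Re (complex_of_real (\<sigma> * (norm a)^2))" unfolding Bab2 cinner_self_norm of_real_mult ..
    finally have "\<sigma> * 1 = \<sigma> * (norm a)^2" by simp
    hence "(norm a)^2 = 1" using spos by (simp only: mult_cancel_left) simp
    hence na: "norm a = 1" using norm_ge_zero[of a] by (simp add: power2_eq_1_iff)
    have Bab: "Bf L a b = complex_of_real \<sigma>" using Bab1 nb by (simp add: cinner_self_norm)
    have aE: "proj E a = a" and bE': "proj E' b = b" using a b unfolding ub_def by auto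
    obtain G where G: "onl G" "length G < length E" "\<And>y. proj E y = y \<Longrightarrow> proj G (qa a y) = qa a y"
      using split_fix[OF E na aE] by blast
    obtain G' where G': "onl G'" "\<And>y. proj E' y = y \<Longrightarrow> proj G' (qa b y) = qa b y"
      using fix_any[OF nb] by blast
    define L' where "L' = map (\<lambda>p. (qa a (fst p), qa b (snd p))) L"
    have fixL': "\<forall>p\<in>set L'. proj G (fst p) = fst p \<and> proj G' (snd p) = snd p"
      unfolding L'_def using fixL G(3) G'(2) by auto
    obtain L3 x' where IH: "teq L' L3" "bal L3" "bounded_clinear x'" "\<And>h. norm (x' h) \<le> norm h"
        "cost L3 \<le> Re (fL L' x')"
      using less.hyps[OF G(2) G(1) G'(1) fixL'] by blast
    define L2 where "L2 = (scaleC (complex_of_real (sqrt \<sigma>)) a, scaleC (complex_of_real (sqrt \<sigma>)) b) # L3"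
    define x where "x h = scaleC (cinner b h) a + qa a (x' (qa b h))" for h
    have teq: "teq L L2"
      unfolding L2_def
      by (rule teq_trans[OF teq_step[OF na nb S1 S2 sig0 Bab]]) (rule teq_cons, fold L'_def, rule IH(1))
    have bal: "bal L2" using IH(2) spos na nb unfolding L2_def bal_def by (simp add: norm_scaleC)
    have cost: "cost L2 = \<sigma> + cost L3" using spos na unfolding L2_def cost_def by (simp add: norm_scaleC)
    have xn: "norm (x h) \<le> norm h" for h
    proof -
      have "(norm (x h))^2 = (cmod (cinner b h))^2 + (norm (qa a (x' (qa b h))))^2"
        unfolding x_def by (rule orth_norm[OF na cinner_qa[OF na]])
      also have "\<dots> \<le> (cmod (cinner b h))^2 + (norm (qa b h))^2"
        using norm_qa_le[OF na, of "x' (qa b h)"] IH(4)[of "qa b h"]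
        by (intro add_left_mono power_mono) auto
      also have "\<dots> = (norm h)^2" using qa_pyth[OF nb, of h] by simp
      finally show ?thesis by (rule power2_le_imp_le) simp
    qed
    have xb: "bounded_clinear x"
    proof -
      have "x (y + z) = x y + x z" for y z
        unfolding x_def by (simp add: cinner_add_right scaleC_add_left qa_add bclinD(1)[OF IH(3)] algebra_simps)
      moreover have "x (scaleC c y) = scaleC c (x y)" for c y
        unfolding x_def by (simp add: cinner_scaleC_right qa_scaleC bclinD(2)[OF IH(3)] scaleC_add_right scaleC_scaleC)
      ultimately show ?thesis unfolding bounded_clinear_def using xn by (metis mult.right_neutral)
    qed
    have "fL L x = Bf L a b + fL L' x'"
    proof -
      have "fL L x = sum_list (map (\<lambda>p. cinner (fst p) a * cinner b (snd p) + cinner (qa a (fst p)) (x' (qa b (snd p)))) L)"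
        unfolding fL_def x_def by (simp add: cinner_add_right cinner_scaleC_right qa_adj mult.commute)
      thus ?thesis by (simp add: sum_list_addf Bf_def fL_def L'_def o_def)
    qed
    hence "Re (fL L x) = \<sigma> + Re (fL L' x')" using Bab by simp
    hence "cost L2 \<le> Re (fL L x)" using cost IH(5) by simp
    thus ?thesis using teq bal xb xn by blast
  qed
qed

definition rk :: "'a::complex_inner \<Rightarrow> 'a \<Rightarrow> 'a" where
  "rk v = (\<lambda>h. scaleC (cinner v h) v)"

lemma bclin_rank1: "bounded_clinear (\<lambda>h::'a::complex_inner. scaleC (cinner u h) v)"
proof -
  have "norm (scaleC (cinner u h) v) \<le> norm h * (norm u * norm v)" for h
  proof -
    have "norm (scaleC (cinner u h) v) = cmod (cinner u h) * norm v" by (rule norm_scaleC)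
    also have "\<dots> \<le> (norm u * norm h) * norm v" using cinner_cs[of u h] by (rule mult_right_mono) simp
    finally show ?thesis by (simp add: mult_ac)
  qed
  thus ?thesis unfolding bounded_clinear_def
    by (auto simp: cinner_add_right scaleC_add_left cinner_scaleC_right scaleC_scaleC)
qed

lemma cadj_rank1: "cadj (\<lambda>h::'a::complex_inner. scaleC (cinner u h) v) = (\<lambda>h. scaleC (cinner v h) u)"
  by (rule cadj_eq_if) (simp add: cinner_scaleC_left cinner_scaleC_right cnj_cinner mult.commute)

lemma rk_rank_one:
  assumes "norm v = 1"
  shows "rank_one_projection (rk v)"
proof -
  have v1: "cinner v v = 1" using assms by (simp add: cinner_self_norm)
  have "rk v \<circ> rk v = rk v"
    unfolding rk_def by (rule ext) (simp add: cinner_scaleC_right v1)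
  moreover have "cadj (rk v) = rk v" unfolding rk_def by (rule cadj_rank1)
  moreover have "range (rk v) = {scaleC c v | c. True}"
  proof
    show "range (rk v) \<subseteq> {scaleC c v | c. True}" unfolding rk_def by auto
    show "{scaleC c v | c. True} \<subseteq> range (rk v)"
    proof
      fix y assume "y \<in> {scaleC c v | c. True}"
      then obtain c where "y = scaleC c v" by blast
      hence "y = rk v (scaleC c v)" unfolding rk_def by (simp add: cinner_scaleC_right v1)
      thus "y \<in> range (rk v)" by blast
    qed
  qed
  moreover have "v \<noteq> 0" using assms by auto
  ultimately show ?thesis unfolding rank_one_projection_def rk_def
    using bclin_rank1 by (metis rk_def)
qed

lemma rank_one_rk:
  fixes p :: "'a::chilbert_space \<Rightarrow> 'a"
  assumes "rank_one_projection p"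
  shows "\<exists>v. norm v = 1 \<and> p = rk v"
proof -
  have bp: "bounded_clinear p" and pp: "p \<circ> p = p" and ap: "cadj p = p"
    using assms unfolding rank_one_projection_def by auto
  obtain v0 where v0: "v0 \<noteq> 0" "range p = {scaleC c v0 | c. True}"
    using assms unfolding rank_one_projection_def by auto
  define v where "v = scaleC (complex_of_real (1 / norm v0)) v0"
  have nv: "norm v = 1" using v0(1) unfolding v_def by (simp add: norm_scaleC norm_divide)
  have "v \<in> range p" using v0(2) unfolding v_def by blast
  then obtain y where y: "v = p y" by blast
  have pv: "p v = v" using pp y by (metis comp_apply)
  have sa: "cinner (p x) z = cinner x (p z)" for x z using cadj_prop[OF bp, of x z] ap by simp
  have "p h = rk v h" for h
  proof -
    have "p h \<in> range p" by blast
    then obtain c where c: "p h = scaleC c v0" using v0(2) by blast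
    have c': "p h = scaleC (c * complex_of_real (norm v0)) v"
      unfolding c v_def scaleC_scaleC using v0(1) by (simp add: field_simps)
    have "cinner v (p h) = c * complex_of_real (norm v0)"
      unfolding c' cinner_scaleC_right using nv by (simp add: cinner_self_norm)
    moreover have "cinner v (p h) = cinner v h" using sa[of v h] pv by simp
    ultimately show ?thesis using c' unfolding rk_def by simp
  qed
  thus ?thesis using nv by blast
qed

lemma onorm_nonneg_bound:
  assumes "0 \<le> C" "\<And>x. norm (f x) \<le> C * norm x"
  shows "0 \<le> onorm f"
proof -
  have bd: "norm (f x) / norm x \<le> C" for x
    using assms by (cases "x = 0") (simp_all add: pos_divide_le_eq)
  have "bdd_above (range (\<lambda>x. norm (f x) / norm x))" using bd by (intro bdd_aboveI[of _ C]) auto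
  hence "norm (f 0) / norm 0 \<le> onorm f" unfolding onorm_def using cSUP_upper[of 0 UNIV "\<lambda>x. norm (f x) / norm x"] by simp
  thus ?thesis by simp
qed

lemma cs_list:
  fixes A B :: "'b \<Rightarrow> real"
  shows "(sum_list (map (\<lambda>q. A q * B q) r))^2 \<le> sum_list (map (\<lambda>q. (A q)^2) r) * sum_list (map (\<lambda>q. (B q)^2) r)"
proof -
  have conv: "sum_list (map f r) = (\<Sum>i\<in>{0..<length r}. f (r ! i))" for f :: "'b \<Rightarrow> real"
    by (simp add: sum_list_sum_nth)
  show ?thesis unfolding conv by (rule Cauchy_Schwarz_ineq_sum)
qed

lemma norm_sum_list_le: "norm (sum_list (map f r)) \<le> sum_list (map (\<lambda>q. norm (f q)) r)"
  by (induction r) (simp_all add: order_trans[OF norm_triangle_ineq])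

lemma elem_op_list: "elem_op l a b x h = sum_list (map (\<lambda>j. a j (x (b j h))) [1..<l+1])"
proof -
  have "{1..l} = set [1..<l+1]" by auto
  thus ?thesis unfolding elem_op_def by (simp only: sum_set_upt_conv_sum_list_nat)
qed

lemma cinner_sum_list_right': "cinner x (sum_list xs) = sum_list (map (cinner x) xs)"
  by (induction xs) (simp_all add: cinner_add_right)

lemma bclin_comp: "bounded_clinear f \<Longrightarrow> bounded_clinear g \<Longrightarrow> bounded_clinear (f \<circ> g)"
proof -
  assume f: "bounded_clinear f" and g: "bounded_clinear g"
  obtain K1 where K1: "K1 \<ge> 0" "\<And>x. norm (f x) \<le> norm x * K1" using bclin_bound[OF f] by blast
  obtain K2 where K2: "K2 \<ge> 0" "\<And>x. norm (g x) \<le> norm x * K2" using bclin_bound[OF g] by blast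
  have "norm (f (g x)) \<le> norm x * (K2 * K1)" for x
    using K1(2)[of "g x"] K2(2)[of x] K1(1) by (smt (verit) mult.assoc mult_right_mono)
  thus ?thesis unfolding bounded_clinear_def using bclinD[OF f] bclinD[OF g] by auto
qed

lemma bclin_comp': "bounded_clinear f \<Longrightarrow> bounded_clinear g \<Longrightarrow> bounded_clinear (\<lambda>h. f (g h))"
  using bclin_comp[of f g] by (simp add: o_def)

lemma bclin_comp3: "bounded_clinear f \<Longrightarrow> bounded_clinear g \<Longrightarrow> bounded_clinear k \<Longrightarrow> bounded_clinear (\<lambda>h. f (g (k h)))"
  using bclin_comp'[of g k] bclin_comp'[of f "\<lambda>h. g (k h)"] by blast

lemma bclin_sum_fun:
  "(\<And>q. q \<in> set r \<Longrightarrow> bounded_clinear (F q)) \<Longrightarrow> bounded_clinear (\<lambda>h. sum_list (map (\<lambda>q. F q h) r))"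
proof (induction r)
  case Nil thus ?case unfolding bounded_clinear_def by (intro conjI allI exI[of _ 0]) simp_all
next
  case (Cons q r)
  have f: "bounded_clinear (F q)" and g: "bounded_clinear (\<lambda>h. sum_list (map (\<lambda>q. F q h) r))"
    using Cons by auto
  obtain K1 where K1: "K1 \<ge> 0" "\<And>x. norm (F q x) \<le> norm x * K1" using bclin_bound[OF f] by blast
  obtain K2 where K2: "K2 \<ge> 0" "\<And>x. norm (sum_list (map (\<lambda>q. F q x) r)) \<le> norm x * K2" using bclin_bound[OF g] by blast
  have "norm (F q x + sum_list (map (\<lambda>q. F q x) r)) \<le> norm x * (K1 + K2)" for x
    using K1(2)[of x] K2(2)[of x] norm_triangle_ineq[of "F q x" "sum_list (map (\<lambda>q. F q x) r)"]
    by (simp add: distrib_left)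
  thus ?case unfolding bounded_clinear_def using bclinD[OF f] bclinD[OF g]
    by (auto simp: scaleC_add_right algebra_simps intro!: exI[of _ "K1 + K2"])
qed

lemma T_bclin:
  assumes ab: "\<forall>j\<in>{1..l}. bounded_clinear (a j) \<and> bounded_clinear (b j)" and x: "bounded_clinear x"
  shows "bounded_clinear (elem_op l a b x)"
proof -
  have "bounded_clinear (\<lambda>h. sum_list (map (\<lambda>j. (a j \<circ> x \<circ> b j) h) [1..<l+1]))"
  proof (rule bclin_sum_fun)
    fix j assume "j \<in> set [1..<l+1]"
    hence aj: "bounded_clinear (a j)" and bj: "bounded_clinear (b j)" using ab by auto
    show "bounded_clinear (a j \<circ> x \<circ> b j)" by (rule bclin_comp[OF bclin_comp[OF aj x] bj])
  qed
  thus ?thesis unfolding elem_op_list[abs_def] by simp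
qed

lemma Es_bdd:
  assumes ab: "\<forall>j\<in>{1..l}. bounded_clinear (a j) \<and> bounded_clinear (b j)"
  shows "bdd_above {onorm (elem_op l a b x) | x. bounded_clinear x \<and> onorm x \<le> 1}"
proof -
  define C where "C = sum_list (map (\<lambda>j. onorm (a j) * onorm (b j)) [1..<l+1])"
  have ab': "bounded_clinear (a j)" "bounded_clinear (b j)" if "j \<in> set [1..<l+1]" for j
    using ab that by auto
  have C0: "C \<ge> 0" unfolding C_def
    by (rule sum_list_nonneg) (auto intro!: mult_nonneg_nonneg onorm_pos_le bclin_bounded_linear ab')
  have "onorm (elem_op l a b x) \<le> C" if x: "bounded_clinear x" "onorm x \<le> 1" for x
  proof (rule onorm_bound[OF C0])
    fix h
    have "norm (elem_op l a b x h) \<le> sum_list (map (\<lambda>j. norm (a j (x (b j h)))) [1..<l+1])"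
      unfolding elem_op_list by (rule norm_sum_list_le)
    also have "\<dots> \<le> sum_list (map (\<lambda>j. onorm (a j) * onorm (b j) * norm h) [1..<l+1])"
    proof (rule sum_list_mono)
      fix j assume j: "j \<in> set [1..<l+1]"
      have "norm (a j (x (b j h))) \<le> onorm (a j) * norm (x (b j h))" by (rule bclin_onorm[OF ab'(1)[OF j]])
      also have "\<dots> \<le> onorm (a j) * (onorm x * norm (b j h))"
        by (intro mult_left_mono bclin_onorm[OF x(1)] onorm_pos_le bclin_bounded_linear ab'(1)[OF j])
      also have "\<dots> \<le> onorm (a j) * (1 * (onorm (b j) * norm h))"
        by (intro mult_left_mono mult_mono x(2) bclin_onorm[OF ab'(2)[OF j]] onorm_pos_le bclin_bounded_linear ab'[OF j]) simp_all
      finally show "norm (a j (x (b j h))) \<le> onorm (a j) * onorm (b j) * norm h" by (simp add: mult_ac)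
    qed
    also have "\<dots> = C * norm h" unfolding C_def by (simp add: sum_list_mult_const)
    finally show "norm (elem_op l a b x h) \<le> C * norm h" .
  qed
  thus ?thesis by (intro bdd_aboveI[of _ C]) auto
qed

lemma sum_list_scaleC_left: "sum_list (map (\<lambda>q. scaleC (f q) v) L) = scaleC (sum_list (map f L)) v"
  by (induction L) (simp_all add: scaleC_add_left)

lemma of_real_sum_list: "complex_of_real (sum_list (map f L)) = sum_list (map (\<lambda>q. complex_of_real (f q)) L)"
  by (induction L) simp_all

lemma hcost_nonneg:
  fixes r :: "(('a::chilbert_space \<Rightarrow> 'a) \<times> ('a \<Rightarrow> 'a)) list"
  assumes "\<forall>q\<in>set r. bounded_clinear (fst q) \<and> bounded_clinear (snd q)"
  shows "0 \<le> onorm (\<lambda>h. sum_list (map (\<lambda>q. fst q (cadj (fst q) h)) r))"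
    and "0 \<le> onorm (\<lambda>h. sum_list (map (\<lambda>q. cadj (snd q) (snd q h)) r))"
proof -
  have "bounded_clinear (\<lambda>h. sum_list (map (\<lambda>q. (fst q \<circ> cadj (fst q)) h) r))"
  proof (rule bclin_sum_fun)
    fix q assume "q \<in> set r"
    hence fq: "bounded_clinear (fst q)" using assms by auto
    show "bounded_clinear (fst q \<circ> cadj (fst q))" by (rule bclin_comp[OF fq cadj_bclin[OF fq]])
  qed
  thus "0 \<le> onorm (\<lambda>h. sum_list (map (\<lambda>q. fst q (cadj (fst q) h)) r))"
    by (simp add: onorm_pos_le bclin_bounded_linear)
  have "bounded_clinear (\<lambda>h. sum_list (map (\<lambda>q. (cadj (snd q) \<circ> snd q) h) r))"
  proof (rule bclin_sum_fun)
    fix q assume "q \<in> set r"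
    hence sq: "bounded_clinear (snd q)" using assms by auto
    show "bounded_clinear (cadj (snd q) \<circ> snd q)" by (rule bclin_comp[OF cadj_bclin[OF sq] sq])
  qed
  thus "0 \<le> onorm (\<lambda>h. sum_list (map (\<lambda>q. cadj (snd q) (snd q h)) r))"
    by (simp add: onorm_pos_le bclin_bounded_linear)
qed

lemma Rset_bdd_below:
  "bdd_below {sqrt (onorm (\<lambda>h. sum_list (map (\<lambda>(c, d). c (cadj c h)) r))) *
          sqrt (onorm (\<lambda>h. sum_list (map (\<lambda>(c, d). cadj d (d h)) r)))
        | r. (\<forall>(c, d) \<in> set r. bounded_clinear (c::'a::chilbert_space \<Rightarrow> 'a) \<and> bounded_clinear (d::'a \<Rightarrow> 'a)) \<and> same_tensor r u}"
proof (rule bdd_belowI[of _ 0])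
  fix t assume "t \<in> {sqrt (onorm (\<lambda>h. sum_list (map (\<lambda>(c, d). c (cadj c h)) r))) *
          sqrt (onorm (\<lambda>h. sum_list (map (\<lambda>(c, d). cadj d (d h)) r)))
        | r. (\<forall>(c, d) \<in> set r. bounded_clinear (c::'a::chilbert_space \<Rightarrow> 'a) \<and> bounded_clinear (d::'a \<Rightarrow> 'a)) \<and> same_tensor r u}"
  then obtain r :: "(('a \<Rightarrow> 'a) \<times> ('a \<Rightarrow> 'a)) list" where t: "t = sqrt (onorm (\<lambda>h. sum_list (map (\<lambda>(c, d). c (cadj c h)) r))) *
          sqrt (onorm (\<lambda>h. sum_list (map (\<lambda>(c, d). cadj d (d h)) r)))"
    and r: "\<forall>(c, d) \<in> set r. bounded_clinear c \<and> bounded_clinear d" by fastforce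
  have r': "\<forall>q\<in>set r. bounded_clinear (fst q) \<and> bounded_clinear (snd q)" using r by auto
  show "0 \<le> t" unfolding t case_prod_unfold using hcost_nonneg[OF r'] by simp
qed

lemma upper:
  fixes a b :: "nat \<Rightarrow> 'a::chilbert_space \<Rightarrow> 'a"
  assumes ab: "\<forall>j\<in>{1..l}. bounded_clinear (a j) \<and> bounded_clinear (b j)"
    and nxi: "norm \<xi> = 1" and neta: "norm \<eta> = 1"
  shows "haagerup_norm (map (\<lambda>j. (rk \<xi> \<circ> a j, b j \<circ> rk \<eta>)) [1..<l+1]) \<le> elem_op_norm l a b"
proof -
  define u where "u = map (\<lambda>j. (rk \<xi> \<circ> a j, b j \<circ> rk \<eta>)) [1..<l+1]"
  have abj: "bounded_clinear (a j)" "bounded_clinear (b j)" if "j \<in> set [1..<l+1]" for j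
    using ab that by auto
  define \<alpha> where "\<alpha> j = cadj (a j) \<xi>" for j
  define \<beta> where "\<beta> j = b j \<eta>" for j
  define L where "L = map (\<lambda>j. (\<alpha> j, \<beta> j)) [1..<l+1]"
  obtain E where E: "onl E" "\<And>w. w \<in> set (map fst L) \<Longrightarrow> proj E w = w" using gram_schmidt_ex by blast
  obtain E' where E': "onl E'" "\<And>w. w \<in> set (map snd L) \<Longrightarrow> proj E' w = w" using gram_schmidt_ex by blast
  have fixL: "\<forall>p\<in>set L. proj E (fst p) = fst p \<and> proj E' (snd p) = snd p" using E(2) E'(2) by auto
  obtain L2 x where td: "teq L L2" "bal L2" "bounded_clinear x" "\<forall>h. norm (x h) \<le> norm h"
      "cost L2 \<le> Re (fL L x)"
    using TD[OF E(1) E'(1) fixL] by blast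
  define C where "C = cost L2"
  have C0: "C \<ge> 0" unfolding C_def cost_def by (rule sum_list_nonneg) auto
  define cf where "cf (\<gamma>::'a) = (\<lambda>h. scaleC (cinner \<gamma> h) \<xi>)" for \<gamma>
  define df where "df (\<delta>::'a) = (\<lambda>h. scaleC (cinner \<eta> h) \<delta>)" for \<delta>
  define r where "r = map (\<lambda>q. (cf (fst q), df (snd q))) L2"
  have rb: "\<forall>(c, d) \<in> set r. bounded_clinear c \<and> bounded_clinear d"
    unfolding r_def cf_def df_def using bclin_rank1 by auto
  have st: "same_tensor r u"
    unfolding same_tensor_def
  proof (intro allI impI)
    fix \<phi> \<psi> :: "('a \<Rightarrow> 'a) \<Rightarrow> complex"
    assume \<phi>: "clinear_functional \<phi>" and \<psi>: "clinear_functional \<psi>"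
    define \<phi>' where "\<phi>' \<gamma> = \<phi> (cf \<gamma>)" for \<gamma>
    define \<psi>' where "\<psi>' \<delta> = \<psi> (df \<delta>)" for \<delta>
    have a\<phi>: "aclin \<phi>'"
      unfolding aclin_def
    proof (intro conjI allI)
      fix x y
      have "cf (x + y) = (\<lambda>h. cf x h + cf y h)" unfolding cf_def by (simp add: cinner_add_left scaleC_add_left)
      thus "\<phi>' (x + y) = \<phi>' x + \<phi>' y" unfolding \<phi>'_def using \<phi> bclin_rank1 unfolding clinear_functional_def cf_def by metis
    next
      fix c x
      have "cf (scaleC c x) = (\<lambda>h. scaleC (cnj c) (cf x h))" unfolding cf_def by (simp add: cinner_scaleC_left scaleC_scaleC)
      thus "\<phi>' (scaleC c x) = cnj c * \<phi>' x" unfolding \<phi>'_def using \<phi> bclin_rank1 unfolding clinear_functional_def cf_def by metis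
    qed
    have c\<psi>: "clin \<psi>'"
      unfolding clin_def
    proof (intro conjI allI)
      fix x y
      have "df (x + y) = (\<lambda>h. df x h + df y h)" unfolding df_def by (simp add: scaleC_add_right)
      thus "\<psi>' (x + y) = \<psi>' x + \<psi>' y" unfolding \<psi>'_def using \<psi> bclin_rank1 unfolding clinear_functional_def df_def by metis
    next
      fix c x
      have "df (scaleC c x) = (\<lambda>h. scaleC c (df x h))" unfolding df_def by (simp add: scaleC_scaleC mult.commute)
      thus "\<psi>' (scaleC c x) = c * \<psi>' x" unfolding \<psi>'_def using \<psi> bclin_rank1 unfolding clinear_functional_def df_def by metis
    qed
    have "sum_list (map (\<lambda>(c, d). \<phi> c * \<psi> d) r) = SL \<phi>' \<psi>' L2"
      unfolding r_def SL_def \<phi>'_def \<psi>'_def by (simp add: o_def)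
    also have "\<dots> = SL \<phi>' \<psi>' L" using td(1) a\<phi> c\<psi> unfolding teq_def by metis
    also have "\<dots> = sum_list (map (\<lambda>(c, d). \<phi> c * \<psi> d) u)"
    proof -
      have "rk \<xi> \<circ> a j = cf (\<alpha> j)" "b j \<circ> rk \<eta> = df (\<beta> j)" if "j \<in> set [1..<l+1]" for j
      proof -
        show "rk \<xi> \<circ> a j = cf (\<alpha> j)" unfolding rk_def cf_def \<alpha>_def
          by (rule ext) (simp add: cadj_prop2[OF abj(1)[OF that]])
        show "b j \<circ> rk \<eta> = df (\<beta> j)" unfolding rk_def df_def \<beta>_def
          by (rule ext) (simp add: bclinD(2)[OF abj(2)[OF that]])
      qed
      hence "u = map (\<lambda>j. (cf (\<alpha> j), df (\<beta> j))) [1..<l+1]"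
        unfolding u_def by (intro map_cong[OF refl]) simp
      thus ?thesis unfolding L_def SL_def \<phi>'_def \<psi>'_def by (simp add: o_def)
    qed
    finally show "sum_list (map (\<lambda>(c, d). \<phi> c * \<psi> d) r) = sum_list (map (\<lambda>(c, d). \<phi> c * \<psi> d) u)" .
  qed
  have F1: "norm (sum_list (map (\<lambda>(c, d). c (cadj c h)) r)) \<le> C * norm h" for h
  proof -
    have "sum_list (map (\<lambda>(c, d). c (cadj c h)) r) = scaleC (cinner \<xi> h * complex_of_real C) \<xi>"
      unfolding r_def C_def cost_def cf_def
      by (simp add: o_def cadj_rank1 cinner_scaleC_right cinner_self_norm sum_list_scaleC_left of_real_sum_list sum_list_const_mult mult.commute)
    also have "norm \<dots> \<le> C * norm h" using cinner_cs[of \<xi> h] nxi C0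
      by (simp add: norm_scaleC norm_mult mult.commute mult_left_mono)
    finally show ?thesis .
  qed
  have F2: "norm (sum_list (map (\<lambda>(c, d). cadj d (d h)) r)) \<le> C * norm h" for h
  proof -
    have C': "C = sum_list (map (\<lambda>p. (norm (snd p))^2) L2)"
      unfolding C_def cost_def using td(2) unfolding bal_def by (simp cong: map_cong)
    have "sum_list (map (\<lambda>(c, d). cadj d (d h)) r) = scaleC (cinner \<eta> h * complex_of_real C) \<eta>"
      unfolding r_def C' df_def
      by (simp add: o_def cadj_rank1 cinner_scaleC_right cinner_self_norm sum_list_scaleC_left of_real_sum_list sum_list_const_mult mult.commute)
    also have "norm \<dots> \<le> C * norm h" using cinner_cs[of \<eta> h] neta C0
      by (simp add: norm_scaleC norm_mult mult.commute mult_left_mono)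
    finally show ?thesis .
  qed
  have o1: "onorm (\<lambda>h. sum_list (map (\<lambda>(c, d). c (cadj c h)) r)) \<le> C" by (rule onorm_bound[OF C0 F1])
  have o2: "onorm (\<lambda>h. sum_list (map (\<lambda>(c, d). cadj d (d h)) r)) \<le> C" by (rule onorm_bound[OF C0 F2])
  have o1': "0 \<le> onorm (\<lambda>h. sum_list (map (\<lambda>(c, d). c (cadj c h)) r))" by (rule onorm_nonneg_bound[OF C0 F1])
  have o2': "0 \<le> onorm (\<lambda>h. sum_list (map (\<lambda>(c, d). cadj d (d h)) r))" by (rule onorm_nonneg_bound[OF C0 F2])
  have "haagerup_norm u \<le> sqrt (onorm (\<lambda>h. sum_list (map (\<lambda>(c, d). c (cadj c h)) r))) *
          sqrt (onorm (\<lambda>h. sum_list (map (\<lambda>(c, d). cadj d (d h)) r)))"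
    unfolding haagerup_norm_def by (rule cInf_lower[OF _ Rset_bdd_below]) (use rb st in blast)
  also have "\<dots> \<le> sqrt C * sqrt C" using o1 o2 o1' o2' by (intro mult_mono) auto
  also have "\<dots> = C" using C0 by simp
  also have "C \<le> Re (fL L x)" using td(5) unfolding C_def .
  also have "fL L x = cinner \<xi> (elem_op l a b x \<eta>)"
  proof -
    have "fL L x = sum_list (map (\<lambda>j. cinner (cadj (a j) \<xi>) (x (b j \<eta>))) [1..<l+1])"
      unfolding fL_def L_def \<alpha>_def \<beta>_def by (simp add: o_def)
    also have "\<dots> = sum_list (map (\<lambda>j. cinner \<xi> (a j (x (b j \<eta>)))) [1..<l+1])"
      by (rule arg_cong[where f = sum_list], rule map_cong[OF refl], rule cadj_prop2[OF abj(1)])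
    also have "\<dots> = cinner \<xi> (elem_op l a b x \<eta>)" unfolding elem_op_list cinner_sum_list_right ..
    finally show ?thesis .
  qed
  also have "Re (cinner \<xi> (elem_op l a b x \<eta>)) \<le> norm (elem_op l a b x \<eta>)"
    using Re_cinner_le[of \<xi> "elem_op l a b x \<eta>"] nxi by simp
  also have "\<dots> \<le> onorm (elem_op l a b x)"
    using bclin_onorm[OF T_bclin[OF ab td(3)], of \<eta>] neta by simp
  also have "\<dots> \<le> elem_op_norm l a b"
  proof -
    have "onorm x \<le> 1" using td(4) by (intro onorm_bound) simp_all
    thus ?thesis unfolding elem_op_norm_def using td(3) by (intro cSup_upper[OF _ Es_bdd[OF ab]]) blast
  qed
  finally show ?thesis unfolding u_def .
qed

lemma F1_bclin:
  fixes r :: "(('a::chilbert_space \<Rightarrow> 'a) \<times> ('a \<Rightarrow> 'a)) list"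
  assumes "\<forall>q\<in>set r. bounded_clinear (fst q)"
  shows "bounded_clinear (\<lambda>h. sum_list (map (\<lambda>q. fst q (cadj (fst q) h)) r))"
proof -
  have "bounded_clinear (\<lambda>h. sum_list (map (\<lambda>q. (fst q \<circ> cadj (fst q)) h) r))"
  proof (rule bclin_sum_fun)
    fix q assume "q \<in> set r"
    hence fq: "bounded_clinear (fst q)" using assms by auto
    show "bounded_clinear (fst q \<circ> cadj (fst q))" by (rule bclin_comp[OF fq cadj_bclin[OF fq]])
  qed
  thus ?thesis by simp
qed

lemma F2_bclin:
  fixes r :: "(('a::chilbert_space \<Rightarrow> 'a) \<times> ('a \<Rightarrow> 'a)) list"
  assumes "\<forall>q\<in>set r. bounded_clinear (snd q)"
  shows "bounded_clinear (\<lambda>h. sum_list (map (\<lambda>q. cadj (snd q) (snd q h)) r))"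
proof -
  have "bounded_clinear (\<lambda>h. sum_list (map (\<lambda>q. (cadj (snd q) \<circ> snd q) h) r))"
  proof (rule bclin_sum_fun)
    fix q assume "q \<in> set r"
    hence sq: "bounded_clinear (snd q)" using assms by auto
    show "bounded_clinear (cadj (snd q) \<circ> snd q)" by (rule bclin_comp[OF cadj_bclin[OF sq] sq])
  qed
  thus ?thesis by simp
qed

lemma key_expand:
  fixes r0 :: "(('a::complex_inner \<Rightarrow> 'a) \<times> ('a \<Rightarrow> 'a)) list"
  assumes x: "bounded_clinear x" and r0: "\<forall>q\<in>set r0. bounded_clinear (fst q)"
  shows "sum_list (map (\<lambda>q. cinner \<xi> (fst q (x (proj G (snd q \<eta>))))) r0)
       = sum_list (map (\<lambda>g. sum_list (map (\<lambda>q. cinner \<xi> (fst q (x g)) * cinner g (snd q \<eta>)) r0)) G)"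
proof -
  have "sum_list (map (\<lambda>q. cinner \<xi> (fst q (x (proj G (snd q \<eta>))))) r0)
      = sum_list (map (\<lambda>q. sum_list (map (\<lambda>g. cinner \<xi> (fst q (x g)) * cinner g (snd q \<eta>)) G)) r0)"
  proof (rule arg_cong[where f = sum_list], rule map_cong[OF refl])
    fix q assume q: "q \<in> set r0"
    have fq: "bounded_clinear (fst q)" using r0 q by auto
    show "cinner \<xi> (fst q (x (proj G (snd q \<eta>)))) = sum_list (map (\<lambda>g. cinner \<xi> (fst q (x g)) * cinner g (snd q \<eta>)) G)"
      unfolding proj_def bclin_sum_list[OF x] bclin_sum_list[OF fq] cinner_sum_list_right
      by (simp add: bclinD(2)[OF x] bclinD(2)[OF fq] cinner_scaleC_right mult.commute)
  qed
  also have "\<dots> = sum_list (map (\<lambda>g. sum_list (map (\<lambda>q. cinner \<xi> (fst q (x g)) * cinner g (snd q \<eta>)) r0)) G)"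
    by (rule sum_list_swap)
  finally show ?thesis .
qed

lemma lower:
  fixes a b :: "nat \<Rightarrow> 'a::chilbert_space \<Rightarrow> 'a"
  assumes ab: "\<forall>j\<in>{1..l}. bounded_clinear (a j) \<and> bounded_clinear (b j)"
    and nxi: "norm \<xi> = 1" and neta: "norm \<eta> = 1"
    and x: "bounded_clinear x" and ox: "onorm x \<le> 1"
  shows "cmod (cinner \<xi> (elem_op l a b x \<eta>)) \<le> haagerup_norm (map (\<lambda>j. (rk \<xi> \<circ> a j, b j \<circ> rk \<eta>)) [1..<l+1])"
proof -
  define u where "u = map (\<lambda>j. (rk \<xi> \<circ> a j, b j \<circ> rk \<eta>)) [1..<l+1]"
  have abj: "bounded_clinear (a j)" "bounded_clinear (b j)" if "j \<in> set [1..<l+1]" for j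
    using ab that by auto
  have rkb: "bounded_clinear (rk v)" for v :: 'a unfolding rk_def by (rule bclin_rank1)
  have ub: "\<forall>q\<in>set u. bounded_clinear (fst q) \<and> bounded_clinear (snd q)"
    unfolding u_def using abj rkb by (auto intro: bclin_comp)
  have xn: "norm (x v) \<le> norm v" for v
    using bclin_onorm[OF x, of v] mult_right_mono[OF ox norm_ge_zero[of v]] by simp
  have xi1: "cinner \<xi> \<xi> = 1" and eta1: "cinner \<eta> \<eta> = 1" using nxi neta by (simp_all add: cinner_self_norm)
  have uval: "sum_list (map (\<lambda>q. cinner \<xi> (fst q (x (snd q \<eta>)))) u) = cinner \<xi> (elem_op l a b x \<eta>)"
    unfolding u_def elem_op_list cinner_sum_list_right
    by (simp add: o_def rk_def cinner_scaleC_right xi1 eta1 scaleC_one)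
  have main: "cmod (cinner \<xi> (elem_op l a b x \<eta>)) \<le>
      sqrt (onorm (\<lambda>h. sum_list (map (\<lambda>q. fst q (cadj (fst q) h)) r))) *
      sqrt (onorm (\<lambda>h. sum_list (map (\<lambda>q. cadj (snd q) (snd q h)) r)))"
    if rb: "\<forall>q\<in>set r. bounded_clinear (fst q) \<and> bounded_clinear (snd q)" and st: "same_tensor r u"
    for r :: "(('a \<Rightarrow> 'a) \<times> ('a \<Rightarrow> 'a)) list"
  proof -
    obtain G where G: "onl G" "\<And>v. v \<in> set (map (\<lambda>q. snd q \<eta>) (r @ u)) \<Longrightarrow> proj G v = v"
      using gram_schmidt_ex by blast
    have pr: "proj G (snd q \<eta>) = snd q \<eta>" if "q \<in> set r" for q using G(2) that by auto
    have pu: "proj G (snd q \<eta>) = snd q \<eta>" if "q \<in> set u" for q using G(2) that by auto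
    have eqg: "sum_list (map (\<lambda>q. cinner \<xi> (fst q (x g)) * cinner g (snd q \<eta>)) r)
             = sum_list (map (\<lambda>q. cinner \<xi> (fst q (x g)) * cinner g (snd q \<eta>)) u)" for g
    proof -
      have cf1: "clinear_functional (\<lambda>c. cinner \<xi> (c (x g)))"
        unfolding clinear_functional_def by (simp add: cinner_add_right cinner_scaleC_right)
      have cf2: "clinear_functional (\<lambda>d. cinner g (d \<eta>))"
        unfolding clinear_functional_def by (simp add: cinner_add_right cinner_scaleC_right)
      show ?thesis using st cf1 cf2 unfolding same_tensor_def case_prod_unfold by blast
    qed
    have "sum_list (map (\<lambda>q. cinner \<xi> (fst q (x (snd q \<eta>)))) r)
        = sum_list (map (\<lambda>q. cinner \<xi> (fst q (x (proj G (snd q \<eta>))))) r)"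
      by (rule arg_cong[where f = sum_list], rule map_cong[OF refl]) (simp add: pr)
    also have "\<dots> = sum_list (map (\<lambda>q. cinner \<xi> (fst q (x (proj G (snd q \<eta>))))) u)"
    proof -
      have r1: "\<forall>q\<in>set r. bounded_clinear (fst q)" and u1: "\<forall>q\<in>set u. bounded_clinear (fst q)"
        using rb ub by auto
      show ?thesis unfolding key_expand[OF x r1] key_expand[OF x u1] eqg ..
    qed
    also have "\<dots> = sum_list (map (\<lambda>q. cinner \<xi> (fst q (x (snd q \<eta>)))) u)"
      by (rule arg_cong[where f = sum_list], rule map_cong[OF refl]) (simp add: pu)
    finally have rv: "sum_list (map (\<lambda>q. cinner \<xi> (fst q (x (snd q \<eta>)))) r) = cinner \<xi> (elem_op l a b x \<eta>)"
      using uval by simp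
    define A where "A q = norm (cadj (fst q) \<xi>)" for q :: "('a \<Rightarrow> 'a) \<times> ('a \<Rightarrow> 'a)"
    define B where "B q = norm (snd q \<eta>)" for q :: "('a \<Rightarrow> 'a) \<times> ('a \<Rightarrow> 'a)"
    define F1 where "F1 = (\<lambda>h. sum_list (map (\<lambda>q. fst q (cadj (fst q) h)) r))"
    define F2 where "F2 = (\<lambda>h. sum_list (map (\<lambda>q. cadj (snd q) (snd q h)) r))"
    have b1: "bounded_clinear F1" unfolding F1_def by (rule F1_bclin) (use rb in auto)
    have b2: "bounded_clinear F2" unfolding F2_def by (rule F2_bclin) (use rb in auto)
    have "cmod (cinner \<xi> (elem_op l a b x \<eta>)) \<le> sum_list (map (\<lambda>q. cmod (cinner \<xi> (fst q (x (snd q \<eta>))))) r)"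
      unfolding rv[symmetric] by (rule norm_sum_list_le)
    also have "\<dots> \<le> sum_list (map (\<lambda>q. A q * B q) r)"
    proof (rule sum_list_mono)
      fix q assume q: "q \<in> set r"
      have fq: "bounded_clinear (fst q)" using rb q by auto
      have "cinner \<xi> (fst q (x (snd q \<eta>))) = cinner (cadj (fst q) \<xi>) (x (snd q \<eta>))"
        using cadj_prop2[OF fq] by simp
      hence "cmod (cinner \<xi> (fst q (x (snd q \<eta>)))) \<le> A q * norm (x (snd q \<eta>))"
        unfolding A_def using cinner_cs by simp
      also have "\<dots> \<le> A q * B q" unfolding B_def using xn by (simp add: A_def mult_left_mono)
      finally show "cmod (cinner \<xi> (fst q (x (snd q \<eta>)))) \<le> A q * B q" .
    qed
    also have "\<dots> \<le> sqrt (sum_list (map (\<lambda>q. (A q)^2) r)) * sqrt (sum_list (map (\<lambda>q. (B q)^2) r))"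
    proof -
      have "sum_list (map (\<lambda>q. A q * B q) r) \<le> sqrt ((sum_list (map (\<lambda>q. A q * B q) r))^2)" by simp
      also have "\<dots> \<le> sqrt (sum_list (map (\<lambda>q. (A q)^2) r) * sum_list (map (\<lambda>q. (B q)^2) r))"
        by (rule real_sqrt_le_mono[OF cs_list])
      finally show ?thesis by (simp add: real_sqrt_mult)
    qed
    also have "\<dots> \<le> sqrt (onorm F1) * sqrt (onorm F2)"
    proof (intro mult_mono real_sqrt_le_mono)
      have "complex_of_real (sum_list (map (\<lambda>q. (A q)^2) r)) = cinner \<xi> (F1 \<xi>)"
        unfolding F1_def cinner_sum_list_right of_real_sum_list A_def
      proof (rule arg_cong[where f = sum_list], rule map_cong[OF refl])
        fix q assume "q \<in> set r"
        hence fq: "bounded_clinear (fst q)" using rb by auto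
        show "complex_of_real ((norm (cadj (fst q) \<xi>))^2) = cinner \<xi> (fst q (cadj (fst q) \<xi>))"
          using cadj_prop2[OF fq, of \<xi> "cadj (fst q) \<xi>"] by (simp add: cinner_self_norm)
      qed
      hence "sum_list (map (\<lambda>q. (A q)^2) r) = Re (cinner \<xi> (F1 \<xi>))" by (metis Re_complex_of_real)
      also have "\<dots> \<le> norm (F1 \<xi>)" using Re_cinner_le[of \<xi> "F1 \<xi>"] nxi by simp
      also have "\<dots> \<le> onorm F1" using bclin_onorm[OF b1, of \<xi>] nxi by simp
      finally show "sum_list (map (\<lambda>q. (A q)^2) r) \<le> onorm F1" .
      have "complex_of_real (sum_list (map (\<lambda>q. (B q)^2) r)) = cinner \<eta> (F2 \<eta>)"
        unfolding F2_def cinner_sum_list_right of_real_sum_list B_def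
      proof (rule arg_cong[where f = sum_list], rule map_cong[OF refl])
        fix q assume "q \<in> set r"
        hence sq: "bounded_clinear (snd q)" using rb by auto
        show "complex_of_real ((norm (snd q \<eta>))^2) = cinner \<eta> (cadj (snd q) (snd q \<eta>))"
          using cadj_prop[OF sq, of \<eta> "snd q \<eta>"] by (simp add: cinner_self_norm)
      qed
      hence "sum_list (map (\<lambda>q. (B q)^2) r) = Re (cinner \<eta> (F2 \<eta>))" by (metis Re_complex_of_real)
      also have "\<dots> \<le> norm (F2 \<eta>)" using Re_cinner_le[of \<eta> "F2 \<eta>"] neta by simp
      also have "\<dots> \<le> onorm F2" using bclin_onorm[OF b2, of \<eta>] neta by simp
      finally show "sum_list (map (\<lambda>q. (B q)^2) r) \<le> onorm F2" .
    qed (auto simp: onorm_pos_le bclin_bounded_linear b1 b2 intro!: sum_list_nonneg)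
    finally show ?thesis unfolding F1_def F2_def .
  qed
  show ?thesis
    unfolding u_def[symmetric] haagerup_norm_def
  proof (rule cInf_greatest)
    show "{sqrt (onorm (\<lambda>h. sum_list (map (\<lambda>(c, d). c (cadj c h)) r))) *
          sqrt (onorm (\<lambda>h. sum_list (map (\<lambda>(c, d). cadj d (d h)) r)))
        | r. (\<forall>(c, d) \<in> set r. bounded_clinear c \<and> bounded_clinear d) \<and> same_tensor r u} \<noteq> {}"
    proof -
      have "same_tensor u u" unfolding same_tensor_def by blast
      moreover have "\<forall>(c, d) \<in> set u. bounded_clinear c \<and> bounded_clinear d" using ub by auto
      ultimately show ?thesis by blast
    qed
  next
    fix t assume "t \<in> {sqrt (onorm (\<lambda>h. sum_list (map (\<lambda>(c, d). c (cadj c h)) r))) *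
          sqrt (onorm (\<lambda>h. sum_list (map (\<lambda>(c, d). cadj d (d h)) r)))
        | r. (\<forall>(c, d) \<in> set r. bounded_clinear c \<and> bounded_clinear d) \<and> same_tensor r u}"
    then obtain r :: "(('a \<Rightarrow> 'a) \<times> ('a \<Rightarrow> 'a)) list" where
      t: "t = sqrt (onorm (\<lambda>h. sum_list (map (\<lambda>(c, d). c (cadj c h)) r))) *
          sqrt (onorm (\<lambda>h. sum_list (map (\<lambda>(c, d). cadj d (d h)) r)))"
      and rb: "\<forall>(c, d) \<in> set r. bounded_clinear c \<and> bounded_clinear d" and st: "same_tensor r u" by blast
    have rb': "\<forall>q\<in>set r. bounded_clinear (fst q) \<and> bounded_clinear (snd q)" using rb by auto
    show "cmod (cinner \<xi> (elem_op l a b x \<eta>)) \<le> t"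
      unfolding t case_prod_unfold using main[OF rb' st] by simp
  qed
qed

theorem lemma1p1:
  fixes a b :: "nat \<Rightarrow> 'a::chilbert_space \<Rightarrow> 'a" and l :: nat
  assumes "\<exists>x::'a. x \<noteq> 0"
    and "\<forall>j\<in>{1..l}. bounded_clinear (a j) \<and> bounded_clinear (b j)"
  shows "elem_op_norm l a b =
    Sup {haagerup_norm (map (\<lambda>j. (p1 \<circ> a j, b j \<circ> p2)) [1..<l+1]) | p1 p2.
           rank_one_projection p1 \<and> rank_one_projection p2}"
proof -
  note ab = assms(2)
  define Hs where "Hs = {haagerup_norm (map (\<lambda>j. (p1 \<circ> a j, b j \<circ> p2)) [1..<l+1]) | p1 p2.
           rank_one_projection p1 \<and> rank_one_projection p2}"
  define Es where "Es = {onorm (elem_op l a b x) | x. bounded_clinear x \<and> onorm x \<le> 1}"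
  obtain x0 :: 'a where x0: "x0 \<noteq> 0" using assms(1) by blast
  define e where "e = scaleC (complex_of_real (1 / norm x0)) x0"
  have ne: "norm e = 1" using x0 unfolding e_def by (simp add: norm_scaleC norm_divide)
  have inHs: "haagerup_norm (map (\<lambda>j. (rk \<xi> \<circ> a j, b j \<circ> rk \<eta>)) [1..<l+1]) \<in> Hs"
    if "norm \<xi> = 1" "norm \<eta> = 1" for \<xi> \<eta> :: 'a
    unfolding Hs_def using rk_rank_one[OF that(1)] rk_rank_one[OF that(2)] by blast
  have Hs_ne: "Hs \<noteq> {}" using inHs[OF ne ne] by blast
  have Hs_le: "t \<le> elem_op_norm l a b" if "t \<in> Hs" for t
  proof -
    from that obtain p1 p2 where t: "t = haagerup_norm (map (\<lambda>j. (p1 \<circ> a j, b j \<circ> p2)) [1..<l+1])"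
      and p: "rank_one_projection p1" "rank_one_projection p2" unfolding Hs_def by blast
    obtain \<xi> where \<xi>: "norm \<xi> = 1" "p1 = rk \<xi>" using rank_one_rk[OF p(1)] by blast
    obtain \<eta> where \<eta>: "norm \<eta> = 1" "p2 = rk \<eta>" using rank_one_rk[OF p(2)] by blast
    show ?thesis unfolding t \<xi>(2) \<eta>(2) by (rule upper[OF ab \<xi>(1) \<eta>(1)])
  qed
  have Hs_bdd: "bdd_above Hs" using Hs_le by (intro bdd_aboveI[of _ "elem_op_norm l a b"]) auto
  have zero_bclin: "bounded_clinear (\<lambda>h::'a. 0::'a)" unfolding bounded_clinear_def
    by (intro conjI allI exI[of _ 0]) simp_all
  have Hs_nonneg: "0 \<le> Sup Hs"
  proof -
    have "cmod (cinner e (elem_op l a b (\<lambda>h. 0) e)) \<le> haagerup_norm (map (\<lambda>j. (rk e \<circ> a j, b j \<circ> rk e)) [1..<l+1])"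
      by (rule lower[OF ab ne ne zero_bclin]) (simp add: onorm_zero)
    also have "\<dots> \<le> Sup Hs" by (rule cSup_upper[OF inHs[OF ne ne] Hs_bdd])
    finally show ?thesis by (meson norm_ge_zero order_trans)
  qed
  have "elem_op_norm l a b \<le> Sup Hs"
    unfolding elem_op_norm_def
  proof (rule cSup_least)
    show "{onorm (elem_op l a b x) | x. bounded_clinear x \<and> onorm x \<le> 1} \<noteq> {}"
      using zero_bclin by (auto simp: onorm_zero intro!: exI[of _ "\<lambda>h. 0"])
  next
    fix t assume "t \<in> {onorm (elem_op l a b x) | x. bounded_clinear x \<and> onorm x \<le> 1}"
    then obtain x :: "'a \<Rightarrow> 'a" where t: "t = onorm (elem_op l a b x)" and x: "bounded_clinear x" "onorm x \<le> 1"
      by blast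
    have Tb: "bounded_clinear (elem_op l a b x)" by (rule T_bclin[OF ab x(1)])
    have "norm (elem_op l a b x h) \<le> Sup Hs * norm h" for h
    proof (cases "h = 0")
      case True thus ?thesis using bclin_zero[OF Tb] by simp
    next
      case False
      define \<eta> where "\<eta> = scaleC (complex_of_real (1 / norm h)) h"
      have n\<eta>: "norm \<eta> = 1" using False unfolding \<eta>_def by (simp add: norm_scaleC norm_divide)
      define y where "y = elem_op l a b x \<eta>"
      have hy: "elem_op l a b x h = scaleC (complex_of_real (norm h)) y"
      proof -
        have "h = scaleC (complex_of_real (norm h)) \<eta>" using False unfolding \<eta>_def by (simp add: scaleC_scaleC scaleC_one)
        hence "elem_op l a b x h = elem_op l a b x (scaleC (complex_of_real (norm h)) \<eta>)" by simp
        thus ?thesis unfolding y_def using bclinD(2)[OF Tb] by simp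
      qed
      have ny: "norm y \<le> Sup Hs"
      proof (cases "y = 0")
        case True thus ?thesis using Hs_nonneg by simp
      next
        case False
        define \<xi> where "\<xi> = scaleC (complex_of_real (1 / norm y)) y"
        have n\<xi>: "norm \<xi> = 1" using False unfolding \<xi>_def by (simp add: norm_scaleC norm_divide)
        have "norm y = cmod (cinner \<xi> y)" unfolding \<xi>_def cinner_normalized by simp
        also have "\<dots> \<le> haagerup_norm (map (\<lambda>j. (rk \<xi> \<circ> a j, b j \<circ> rk \<eta>)) [1..<l+1])"
          unfolding y_def by (rule lower[OF ab n\<xi> n\<eta> x])
        also have "\<dots> \<le> Sup Hs" by (rule cSup_upper[OF inHs[OF n\<xi> n\<eta>] Hs_bdd])
        finally show ?thesis .
      qed
      have "norm (elem_op l a b x h) = norm h * norm y" unfolding hy by (simp add: norm_scaleC)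
      also have "\<dots> \<le> norm h * Sup Hs" using ny by (simp add: mult_left_mono)
      finally show ?thesis by (simp add: mult.commute)
    qed
    thus "t \<le> Sup Hs" unfolding t by (rule onorm_bound[OF Hs_nonneg])
  qed
  moreover have "Sup Hs \<le> elem_op_norm l a b" by (rule cSup_least[OF Hs_ne Hs_le])
  ultimately show ?thesis unfolding Hs_def by simp
qed

end
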